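(* For all $r, s > 0$, $$\theta_3(rs)\,\theta_3\!\left(\frac{r}{s}\right) \ge \theta_3(r)^2 \qquad\text{and}\qquad \theta_4(rs)\,\theta_4\!\left(\frac{r}{s}\right) \le \theta_4(r)^2,$$ with equality in either inequality only for $s = 1$.
   Context: For $s>0$, $\theta_3(s) = \sum_{k\in\mathbb{Z}} e^{-\pi k^2 s}$ and $\theta_4(s) = \sum_{k\in\mathbb{Z}} (-1)^k e^{-\pi k^2 s}$. *)

theory Defs
  imports "HOL-Analysis.Analysis"
begin

definition theta3 :: "real \<Rightarrow> real" where
  "theta3 s = (\<Sum>\<^sub>\<infinity> k::int. exp (- pi * (of_int k)^2 * s))"

definition theta4 :: "real \<Rightarrow> real" where
  "theta4 s = (\<Sum>\<^sub>\<infinity> k::int. (-1) powi k * exp (- pi * (of_int k)^2 * s))"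

end

theory Submission
  imports Defs "HOL-Probability.Characteristic_Functions" "HOL-Real_Asymp.Real_Asymp"
begin

lemma summ_poly_gauss:
  fixes c :: real assumes "c > 0"
  shows "summable (\<lambda>n::nat. real n ^ k * exp (- c * real n ^ 2))"
proof (rule summable_comparison_test_bigo)
  show "summable (\<lambda>n::nat. norm (1 / real n ^ 2))"
    using inverse_power_summable[of 2] by (simp add: divide_inverse)
  show "(\<lambda>n::nat. real n ^ k * exp (- c * real n ^ 2)) \<in> O(\<lambda>n. 1 / real n ^ 2)"
    using assms by real_asymp
qed

lemma summ_gauss:
  fixes c :: real assumes "c > 0"
  shows "summable (\<lambda>n::nat. exp (- c * real n ^ 2))"
  using summ_poly_gauss[OF assms, of 0] by simp

lemma std_normal_cos:
  "integrable lborel (\<lambda>v. std_normal_density v * cos (t * v)) \<and>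
   (LINT v|lborel. std_normal_density v * cos (t * v)) = exp (- (t^2) / 2)"
proof -
  have i0: "integrable lborel std_normal_density"
    using integrable_std_normal_moment[of 0] by simp
  have ic: "integrable lborel (\<lambda>v. std_normal_density v *\<^sub>R iexp (t * v))"
    by (rule Bochner_Integration.integrable_bound[OF i0]) (auto simp: norm_mult normal_density_nonneg)
  have "char std_normal_distribution t = (CLINT v|lborel. std_normal_density v *\<^sub>R iexp (t * v))"
    unfolding char_def by (subst integral_density) (auto simp: normal_density_nonneg)
  then have e: "(CLINT v|lborel. std_normal_density v *\<^sub>R iexp (t * v)) = complex_of_real (exp (- (t^2) / 2))"
    using char_std_normal_distribution by simp
  have re: "\<And>v. Re (std_normal_density v *\<^sub>R iexp (t * v)) = std_normal_density v * cos (t * v)"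
    by (simp add: Re_exp)
  have "integrable lborel (\<lambda>v. Re (std_normal_density v *\<^sub>R iexp (t * v)))"
    using integrable_Re[OF ic] .
  moreover have "(LINT v|lborel. Re (std_normal_density v *\<^sub>R iexp (t * v))) = exp (- (t^2) / 2)"
    using integral_Re[OF ic] e by simp
  ultimately show ?thesis unfolding re by simp
qed

lemma gauss_cos_lborel:
  fixes x w :: real assumes x: "x > 0"
  shows "integrable lborel (\<lambda>u. exp (-pi*x*u^2) * cos (w*u)) \<and>
         (LINT u|lborel. exp (-pi*x*u^2) * cos (w*u)) = exp (- (w^2) / (4*pi*x)) / sqrt x"
proof -
  define c where "c = sqrt (2*pi*x)"
  have c: "c > 0" using x by (simp add: c_def)
  have c2: "c^2 = 2*pi*x" using x by (simp add: c_def)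
  define t where "t = w / c"
  obtain I: "integrable lborel (\<lambda>v. std_normal_density v * cos (t * v))"
     and E: "(LINT v|lborel. std_normal_density v * cos (t * v)) = exp (- (t^2) / 2)"
    using std_normal_cos by blast
  have fe: "\<And>u. std_normal_density (0 + c*u) * cos (t*(0 + c*u)) = (1/sqrt(2*pi)) * (exp (-pi*x*u^2) * cos (w*u))"
    using c c2 by (simp add: std_normal_density_def t_def power_mult_distrib)
  have I2: "integrable lborel (\<lambda>u. (1/sqrt(2*pi)) * (exp (-pi*x*u^2) * cos (w*u)))"
    using lborel_integrable_real_affine[OF I, of c 0] c fe by simp
  have I3: "integrable lborel (\<lambda>u. exp (-pi*x*u^2) * cos (w*u))"
    using integrable_mult_right[OF I2, of "sqrt(2*pi)"] by simp
  have "exp (- (t^2) / 2) = c * (LINT u|lborel. (1/sqrt(2*pi)) * (exp (-pi*x*u^2) * cos (w*u)))"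
    using lborel_integral_real_affine[of c "\<lambda>v. std_normal_density v * cos (t * v)" 0] c E fe by simp
  also have "\<dots> = c / sqrt(2*pi) * (LINT u|lborel. exp (-pi*x*u^2) * cos (w*u))"
    by simp
  finally have "(LINT u|lborel. exp (-pi*x*u^2) * cos (w*u)) = exp (- (t^2) / 2) * sqrt(2*pi) / c"
    using c by (simp add: field_simps)
  also have "\<dots> = exp (- (w^2) / (4*pi*x)) / sqrt x"
    using c c2 x by (simp add: t_def c_def power_divide real_sqrt_mult field_simps)
  finally show ?thesis using I3 by simp
qed

lemma gauss_cos_has_integral:
  fixes x w :: real assumes x: "x > 0"
  shows "((\<lambda>u. exp (-pi*x*u^2) * cos (w*u)) has_integral (exp (- (w^2) / (4*pi*x)) / sqrt x)) UNIV"
  using has_integral_integral_lborel[of "\<lambda>u. exp (-pi*x*u^2) * cos (w*u)"] gauss_cos_lborel[OF x, of w]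
  by simp

definition gs :: "real \<Rightarrow> real \<Rightarrow> real" where "gs x u = exp (-pi*x*u^2)"

lemma gs_mono: assumes "x > 0" "\<bar>u\<bar> \<ge> \<bar>v\<bar>" shows "gs x u \<le> gs x v"
proof -
  have "v^2 \<le> u^2" using assms(2) by (metis abs_le_square_iff)
  then have "pi*x * v^2 \<le> pi*x*u^2" using assms(1) by (simp add: mult_left_mono)
  then show ?thesis unfolding gs_def by simp
qed

definition Fs :: "real \<Rightarrow> real \<Rightarrow> real" where
  "Fs x t = (\<Sum>n. gs x (t + real n) + gs x (t - real n - 1))"

lemma Fs_bound:
  assumes x: "x > 0" and t: "t \<in> {0..1}"
  shows "\<bar>gs x (t + real n) + gs x (t - real n - 1)\<bar> \<le> 2 * exp (- (pi*x) * real n ^ 2)"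
proof -
  have 1: "gs x (t + real n) \<le> gs x (real n)" using t by (intro gs_mono[OF x]) auto
  have 2: "gs x (t - real n - 1) \<le> gs x (real n)" using t by (intro gs_mono[OF x]) auto
  have "gs x (t + real n) > 0" "gs x (t - real n - 1) > 0" by (auto simp: gs_def)
  then have "\<bar>gs x (t + real n) + gs x (t - real n - 1)\<bar> \<le> 2 * gs x (real n)" using 1 2 by linarith
  then show ?thesis by (simp add: gs_def)
qed

lemma summ_2gauss: "x > 0 \<Longrightarrow> summable (\<lambda>n::nat. 2 * exp (- (pi*x) * real n ^ 2))"
  by (intro summable_mult summ_gauss) simp

lemma Fs_uniform:
  assumes x: "x > 0" and that: "\<And>t. \<bar>c t\<bar> \<le> 1"
  shows "uniform_limit {0..1} (\<lambda>N t. \<Sum>n<N. (gs x (t + real n) + gs x (t - real n - 1)) * c t)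
            (\<lambda>t. Fs x t * c t) sequentially"
proof -
  have A: "uniform_limit {0..1} (\<lambda>N t. \<Sum>n<N. (gs x (t + real n) + gs x (t - real n - 1)) * c t)
            (\<lambda>t. \<Sum>n. (gs x (t + real n) + gs x (t - real n - 1)) * c t) sequentially"
  proof (rule Weierstrass_m_test[OF _ summ_2gauss[OF x]])
    fix n and t :: real assume t: "t \<in> {0..1}"
    have "\<bar>(gs x (t + real n) + gs x (t - real n - 1)) * c t\<bar> \<le> 2 * exp (- (pi*x) * real n ^ 2) * 1"
      unfolding abs_mult by (intro mult_mono Fs_bound[OF x t] that) auto
    then show "norm ((gs x (t + real n) + gs x (t - real n - 1)) * c t) \<le> 2 * exp (- (pi*x) * real n ^ 2)"
      by simp
  qed
  have B: "(\<Sum>n. (gs x (t + real n) + gs x (t - real n - 1)) * c t) = Fs x t * c t" if that: "t \<in> {0..1}" for t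
  proof -
    have "summable (\<lambda>n. gs x (t + real n) + gs x (t - real n - 1))"
      by (rule summable_comparison_test[OF _ summ_2gauss[OF x]]) (use Fs_bound[OF x that] in auto)
    then show ?thesis unfolding Fs_def by (rule suminf_mult2[symmetric])
  qed
  show ?thesis by (rule uniform_limit_cong'[THEN iffD1, OF _ _ A]) (use B in auto)
qed

definition hh :: "real \<Rightarrow> nat \<Rightarrow> real \<Rightarrow> real" where
  "hh x m u = gs x u * cos (2*pi*real m*u)"

lemma cont_hh: "continuous_on S (hh x m)"
  unfolding hh_def gs_def by (intro continuous_intros)

lemma int_hh: "hh x m integrable_on {a..b}"
  by (rule integrable_continuous_interval[OF cont_hh])

lemma cos_shift_nat: "cos (a + 2*pi*real k) = cos a"
proof -
  have "cos (2*pi*real k) = 1" "sin (2*pi*real k) = 0"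
    using cos_npi[of "2*k"] sin_npi[of "2*k"] by (simp_all add: mult_ac)
  then show ?thesis by (simp add: cos_add)
qed

lemma cos_shift1: "cos (2*pi*real m*(t + real n)) = cos (2*pi*real m*t)"
  using cos_shift_nat[of "2*pi*real m*t" "m*n"] by (simp add: algebra_simps)

lemma cos_shift2: "cos (2*pi*real m*(t - real n - 1)) = cos (2*pi*real m*t)"
  using cos_shift_nat[of "2*pi*real m*(t - real n - 1)" "m*(n+1)"] by (simp add: algebra_simps)

lemma term_integral:
  "((\<lambda>t. (gs x (t + real n) + gs x (t - real n - 1)) * cos (2*pi*real m*t)) has_integral
     (integral {real n..real n + 1} (hh x m) + integral {- real n - 1.. - real n} (hh x m))) {0..1}"
proof -
  have A0: "(hh x m has_integral integral {real n..real n + 1} (hh x m)) {real n..real n + 1}"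
    by (rule integrable_integral[OF int_hh])
  have A: "((\<lambda>t. hh x m (t + real n)) has_integral integral {real n..real n + 1} (hh x m)) {0..1}"
    using has_integral_shift_real_ivl[OF A0, of "real n"] by simp
  have B0: "(hh x m has_integral integral {- real n - 1.. - real n} (hh x m)) {- real n - 1.. - real n}"
    by (rule integrable_integral[OF int_hh])
  have B: "((\<lambda>t. hh x m (t + (- real n - 1))) has_integral integral {- real n - 1.. - real n} (hh x m)) {0..1}"
    using has_integral_shift_real_ivl[OF B0, of "- real n - 1"] by simp
  have "\<And>t. (gs x (t + real n) + gs x (t - real n - 1)) * cos (2*pi*real m*t) =
             hh x m (t + real n) + hh x m (t + (- real n - 1))"
    unfolding hh_def using cos_shift1 cos_shift2 by (simp add: algebra_simps)
  then show ?thesis using has_integral_add[OF A B] by simp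
qed

lemma partial_integral:
  "(\<Sum>n<N. integral {real n..real n + 1} (hh x m) + integral {- real n - 1.. - real n} (hh x m))
    = integral {- real N..real N} (hh x m)"
proof (induction N)
  case 0 then show ?case by simp
next
  case (Suc N)
  have "integral {- real N - 1.. - real N} (hh x m) + integral {- real N..real N} (hh x m)
        = integral {- real N - 1..real N} (hh x m)"
    using Henstock_Kurzweil_Integration.integral_combine[where a="- real N - 1" and c="- real N" and b="real N" and f="hh x m"] int_hh by simp
  moreover have "integral {- real N - 1..real N} (hh x m) + integral {real N..real N + 1} (hh x m)
        = integral {- real N - 1..real N + 1} (hh x m)"
    using Henstock_Kurzweil_Integration.integral_combine[where a="- real N - 1" and c="real N" and b="real N + 1" and f="hh x m"] int_hh by simp
  ultimately have "(\<Sum>n<Suc N. integral {real n..real n + 1} (hh x m) + integral {- real n - 1.. - real n} (hh x m))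
     = integral {- real N - 1..real N + 1} (hh x m)"
    by (simp only: sum.lessThan_Suc Suc.IH)
  also have "{- real N - 1..real N + 1} = {- real (Suc N)..real (Suc N)}" by simp
  finally show ?case .
qed

lemma integral_hh_limit:
  assumes x: "x > 0"
  shows "(\<lambda>N. integral {- real N..real N} (hh x m)) \<longlonglongrightarrow> exp (- pi * (real m)^2 / x) / sqrt x"
proof -
  have HI: "(hh x m has_integral exp (- pi * (real m)^2 / x) / sqrt x) UNIV"
  proof -
    have "exp (- ((2*pi*real m)^2) / (4*pi*x)) = exp (- pi * (real m)^2 / x)"
      using x by (simp add: power_mult_distrib power2_eq_square field_simps)
    then show ?thesis
      using gauss_cos_has_integral[OF x, of "2*pi*real m"] unfolding hh_def gs_def by (simp add: mult_ac)
  qed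
  show ?thesis
  proof (rule LIMSEQ_I)
    fix e :: real assume e: "e > 0"
    obtain B where B: "B > 0" and
      HB: "\<forall>a b. ball 0 B \<subseteq> cbox a b \<longrightarrow>
        (\<exists>z. ((\<lambda>u. if u \<in> UNIV then hh x m u else 0) has_integral z) (cbox a b) \<and>
             norm (z - exp (- pi * (real m)^2 / x) / sqrt x) < e)"
      using has_integral_altD[OF HI _ e] by auto
    obtain N0 :: nat where N0: "real N0 > B" using reals_Archimedean2 by blast
    show "\<exists>no. \<forall>N\<ge>no. norm (integral {- real N..real N} (hh x m) - exp (- pi * (real m)^2 / x) / sqrt x) < e"
    proof (intro exI allI impI)
      fix N assume N: "N \<ge> N0"
      have "ball 0 B \<subseteq> cbox (- real N) (real N)"
        using N N0 by (auto simp: dist_real_def)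
      then obtain z where z: "(hh x m has_integral z) {- real N..real N}"
        and zz: "norm (z - exp (- pi * (real m)^2 / x) / sqrt x) < e"
        using HB by (auto simp del: cbox_interval) blast
      then show "norm (integral {- real N..real N} (hh x m) - exp (- pi * (real m)^2 / x) / sqrt x) < e"
        using integral_unique[OF z] by simp
    qed
  qed
qed

lemma Fs_coeff:
  assumes x: "x > 0"
  shows "((\<lambda>t. Fs x t * cos (2*pi*real m*t)) has_integral exp (- pi * (real m)^2 / x) / sqrt x) {0..1}"
proof -
  have U: "uniform_limit {0..1} (\<lambda>N t. \<Sum>n<N. (gs x (t + real n) + gs x (t - real n - 1)) * cos (2*pi*real m*t))
            (\<lambda>t. Fs x t * cos (2*pi*real m*t)) sequentially"
    by (rule Fs_uniform[OF x]) simp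
  have C: "continuous_on {0..1} (\<lambda>t. \<Sum>n<N. (gs x (t + real n) + gs x (t - real n - 1)) * cos (2*pi*real m*t))" for N
    unfolding gs_def by (intro continuous_intros)
  obtain I J where I: "\<And>N. ((\<lambda>t. \<Sum>n<N. (gs x (t + real n) + gs x (t - real n - 1)) * cos (2*pi*real m*t)) has_integral I N) {0..1}"
    and J: "((\<lambda>t. Fs x t * cos (2*pi*real m*t)) has_integral J) {0..1}" and IJ: "I \<longlonglongrightarrow> J"
    by (rule uniform_limit_integral[OF U C]) auto
  have Ieq: "I N = integral {- real N..real N} (hh x m)" for N
  proof -
    have "((\<lambda>t. \<Sum>n<N. (gs x (t + real n) + gs x (t - real n - 1)) * cos (2*pi*real m*t)) has_integral
       (\<Sum>n<N. integral {real n..real n + 1} (hh x m) + integral {- real n - 1.. - real n} (hh x m))) {0..1}"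
      by (intro has_integral_sum term_integral) auto
    from has_integral_unique[OF I[of N] this] show ?thesis by (simp only: partial_integral)
  qed
  have "I = (\<lambda>N. integral {- real N..real N} (hh x m))" using Ieq by (rule ext)
  then have "I \<longlonglongrightarrow> exp (- pi * (real m)^2 / x) / sqrt x" using integral_hh_limit[OF x, of m] by simp
  then have "J = exp (- pi * (real m)^2 / x) / sqrt x" using IJ LIMSEQ_unique by blast
  then show ?thesis using J by simp
qed

lemma int_cos:
  "((\<lambda>t. cos (2*pi*real_of_int j*t)) has_integral (if j = 0 then 1 else 0)) {0..1}"
proof (cases "j = 0")
  case True then show ?thesis using has_integral_const_real[of "1::real" 0 1] by simp
next
  case False
  then have nz: "2*pi*real_of_int j \<noteq> 0" by simp
  have "((\<lambda>t. cos (2*pi*real_of_int j*t)) has_integral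
        (sin (2*pi*real_of_int j*1) / (2*pi*real_of_int j) - sin (2*pi*real_of_int j*0) / (2*pi*real_of_int j))) {0..1}"
  proof (rule fundamental_theorem_of_calculus)
    fix t :: real assume "t \<in> {0..1}"
    have "((\<lambda>t. sin (2*pi*real_of_int j*t) / (2*pi*real_of_int j)) has_real_derivative
          (cos (2*pi*real_of_int j*t) * (2*pi*real_of_int j) / (2*pi*real_of_int j))) (at t within {0..1})"
      by (auto intro!: derivative_eq_intros)
    then show "((\<lambda>t. sin (2*pi*real_of_int j*t) / (2*pi*real_of_int j)) has_vector_derivative
          cos (2*pi*real_of_int j*t)) (at t within {0..1})"
      using nz by (simp add: has_real_derivative_iff_has_vector_derivative)
  qed simp
  moreover have "sin (2*pi*real_of_int j) = 0" using sin_int_2pin[of j] by (simp add: mult_ac)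
  ultimately show ?thesis using False by simp
qed

lemma cos_orth:
  "((\<lambda>t. cos (2*pi*real m*t) * cos (2*pi*real k*t)) has_integral
     (if m = k then (if k = 0 then 1 else 1/2) else 0)) {0..1}"
proof -
  have e: "cos (2*pi*real m*t) * cos (2*pi*real k*t) =
     (cos (2*pi*real_of_int (int m + int k)*t) + cos (2*pi*real_of_int (int m - int k)*t)) / 2" for t
    by (simp add: cos_add cos_diff algebra_simps)
  have "((\<lambda>t. (cos (2*pi*real_of_int (int m + int k)*t) + cos (2*pi*real_of_int (int m - int k)*t)) / 2) has_integral
       ((if int m + int k = 0 then 1 else 0) + (if int m - int k = 0 then 1 else 0)) / 2) {0..1}"
    by (intro has_integral_divide has_integral_add int_cos)
  then show ?thesis unfolding e by (auto split: if_splits)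
qed

definition co :: "real \<Rightarrow> nat \<Rightarrow> real" where
  "co x m = (if m = 0 then 1 else 2) * (exp (- pi * (real m)^2 / x) / sqrt x)"

definition Hs :: "real \<Rightarrow> real \<Rightarrow> real" where
  "Hs x t = (\<Sum>m. co x m * cos (2*pi*real m*t))"

lemma co_bound: assumes "x > 0" shows "\<bar>co x m\<bar> \<le> 2 / sqrt x * exp (- (pi / x) * real m ^ 2)"
proof -
  have e: "exp (- pi * (real m)^2 / x) = exp (- (pi / x) * real m ^ 2)" by simp
  have "\<bar>co x m\<bar> = (if m = 0 then 1 else 2) * (exp (- (pi / x) * real m ^ 2) / sqrt x)"
    unfolding co_def e using assms by simp
  also have "\<dots> \<le> 2 * (exp (- (pi / x) * real m ^ 2) / sqrt x)"
    by (intro mult_right_mono) (use assms in auto)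
  finally show ?thesis by simp
qed

lemma summ_co: "x > 0 \<Longrightarrow> summable (\<lambda>m::nat. 2 / sqrt x * exp (- (pi / x) * real m ^ 2))"
  by (intro summable_mult summ_gauss) simp
lemma co_term_bound:
  assumes x: "x > 0" and c: "\<bar>c\<bar> \<le> 1"
  shows "\<bar>co x m * cos y * c\<bar> \<le> 2 / sqrt x * exp (- (pi / x) * real m ^ 2)"
proof -
  have "\<bar>cos y * c\<bar> \<le> 1" using abs_cos_le_one[of y] c by (simp add: abs_mult mult_le_one)
  then have "\<bar>co x m\<bar> * \<bar>cos y * c\<bar> \<le> \<bar>co x m\<bar> * 1" by (intro mult_left_mono) auto
  also have "\<dots> \<le> 2 / sqrt x * exp (- (pi / x) * real m ^ 2)" using co_bound[OF x] by simp
  finally show ?thesis by (simp add: abs_mult mult.assoc)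
qed

lemma Hs_uniform:
  assumes x: "x > 0" and c: "\<And>t. \<bar>c t\<bar> \<le> 1"
  shows "uniform_limit UNIV (\<lambda>N t. \<Sum>m<N. co x m * cos (2*pi*real m*t) * c t)
            (\<lambda>t. Hs x t * c t) sequentially"
proof -
  have A: "uniform_limit UNIV (\<lambda>N t. \<Sum>m<N. co x m * cos (2*pi*real m*t) * c t)
            (\<lambda>t. \<Sum>m. co x m * cos (2*pi*real m*t) * c t) sequentially"
    by (rule Weierstrass_m_test[OF _ summ_co[OF x]]) (simp only: real_norm_def co_term_bound[OF x c])
  have B: "(\<Sum>m. co x m * cos (2*pi*real m*t) * c t) = Hs x t * c t" for t
  proof -
    have "summable (\<lambda>m. co x m * cos (2*pi*real m*t) * 1)"
      by (rule summable_comparison_test[OF _ summ_co[OF x]]) (simp only: real_norm_def co_term_bound[OF x] abs_one order_refl, blast)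
    then show ?thesis unfolding Hs_def by (simp add: suminf_mult2[symmetric])
  qed
  show ?thesis by (rule uniform_limit_cong'[THEN iffD1, OF _ _ A]) (simp_all only: B)
qed
lemma Hs_coeff:
  assumes x: "x > 0"
  shows "((\<lambda>t. Hs x t * cos (2*pi*real k*t)) has_integral exp (- pi * (real k)^2 / x) / sqrt x) {0..1}"
proof -
  have U: "uniform_limit {0..1} (\<lambda>N t. \<Sum>m<N. co x m * cos (2*pi*real m*t) * cos (2*pi*real k*t))
            (\<lambda>t. Hs x t * cos (2*pi*real k*t)) sequentially"
    by (rule uniform_limit_on_subset[OF Hs_uniform[OF x]]) auto
  have C: "continuous_on {0..1} (\<lambda>t. \<Sum>m<N. co x m * cos (2*pi*real m*t) * cos (2*pi*real k*t))" for N
    by (intro continuous_intros)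
  obtain I J where I: "\<And>N. ((\<lambda>t. \<Sum>m<N. co x m * cos (2*pi*real m*t) * cos (2*pi*real k*t)) has_integral I N) {0..1}"
    and J: "((\<lambda>t. Hs x t * cos (2*pi*real k*t)) has_integral J) {0..1}" and IJ: "I \<longlonglongrightarrow> J"
    by (rule uniform_limit_integral[OF U C]) auto
  have "I N = (\<Sum>m<N. co x m * (if m = k then (if k = 0 then 1 else 1/2) else 0))" for N
  proof -
    have "((\<lambda>t. \<Sum>m<N. co x m * cos (2*pi*real m*t) * cos (2*pi*real k*t)) has_integral
       (\<Sum>m<N. co x m * (if m = k then (if k = 0 then 1 else 1/2) else 0))) {0..1}"
    proof (intro has_integral_sum)
      fix m
      show "((\<lambda>t. co x m * cos (2*pi*real m*t) * cos (2*pi*real k*t)) has_integral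
         co x m * (if m = k then (if k = 0 then 1 else 1/2) else 0)) {0..1}"
        using has_integral_mult_right[OF cos_orth[of m k], of "co x m"] by (simp add: mult.assoc)
    qed simp
    from has_integral_unique[OF I[of N] this] show ?thesis .
  qed
  moreover have "(\<Sum>m<N. co x m * (if m = k then (if k = 0 then 1 else 1/2) else 0)) = exp (- pi * (real k)^2 / x) / sqrt x"
    if "N > k" for N
  proof -
    have "(\<Sum>m<N. co x m * (if m = k then (if k = 0 then 1 else 1/2) else 0)) =
          (\<Sum>m\<in>{k}. co x m * (if m = k then (if k = 0 then 1 else 1/2) else 0))"
      by (rule sum.mono_neutral_right) (use that in auto)
    then show ?thesis by (simp add: co_def)
  qed
  ultimately have "eventually (\<lambda>N. I N = exp (- pi * (real k)^2 / x) / sqrt x) sequentially"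
    unfolding eventually_sequentially by (intro exI[of _ "Suc k"]) simp
  then have "I \<longlonglongrightarrow> exp (- pi * (real k)^2 / x) / sqrt x"
    by (rule tendsto_eventually)
  then have "J = exp (- pi * (real k)^2 / x) / sqrt x" using IJ LIMSEQ_unique by blast
  then show ?thesis using J by simp
qed

inductive trigp :: "(real \<Rightarrow> real) \<Rightarrow> bool" where
  tcos: "trigp (\<lambda>t. cos (2*pi*real k*t))"
| tadd: "trigp p \<Longrightarrow> trigp q \<Longrightarrow> trigp (\<lambda>t. p t + q t)"
| tscale: "trigp p \<Longrightarrow> trigp (\<lambda>t. c * p t)"

lemma trigp_const: "trigp (\<lambda>t. c)"
  using tscale[OF tcos[of 0], of c] by simp

lemma trigp_cos_mult: "trigp (\<lambda>t. cos (2*pi*real j*t) * cos (2*pi*real k*t))"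
proof -
  define d where "d = (if j \<ge> k then j - k else k - j)"
  have "cos (2*pi*real j*t) * cos (2*pi*real k*t) =
        1/2 * cos (2*pi*real (j+k)*t) + 1/2 * cos (2*pi*real d*t)" for t
  proof -
    have "cos (2*pi*real d*t) = cos (2*pi*real j*t - 2*pi*real k*t)"
    proof (cases "j \<ge> k")
      case True then show ?thesis by (simp add: d_def of_nat_diff algebra_simps)
    next
      case False
      then have "cos (2*pi*real d*t) = cos (- (2*pi*real j*t - 2*pi*real k*t))"
        by (simp add: d_def of_nat_diff algebra_simps)
      then show ?thesis by (simp only: cos_minus)
    qed
    then show ?thesis by (simp add: cos_diff cos_add algebra_simps)
  qed
  then have e: "(\<lambda>t. cos (2*pi*real j*t) * cos (2*pi*real k*t)) =
        (\<lambda>t. 1/2 * cos (2*pi*real (j+k)*t) + 1/2 * cos (2*pi*real d*t))" by (rule ext)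
  show ?thesis unfolding e by (intro tadd tscale tcos)
qed

lemma trigp_mult_cos: "trigp p \<Longrightarrow> trigp (\<lambda>t. p t * cos (2*pi*real k*t))"
proof (induction rule: trigp.induct)
  case (tcos j) then show ?case by (rule trigp_cos_mult)
next
  case (tadd p q) then show ?case using trigp.tadd[OF tadd.IH] by (simp add: algebra_simps)
next
  case (tscale p c) then show ?case using trigp.tscale[OF tscale.IH, of c] by (simp add: mult.assoc)
qed

lemma trigp_mult: assumes "trigp p" shows "trigp q \<Longrightarrow> trigp (\<lambda>t. p t * q t)"
proof (induction q rule: trigp.induct)
  case (tcos k) then show ?case by (rule trigp_mult_cos[OF assms])
next
  case (tadd q1 q2) then show ?case using trigp.tadd[OF tadd.IH] by (simp add: algebra_simps)
next
  case (tscale q c) then show ?case using trigp.tscale[OF tscale.IH, of c] by (simp add: algebra_simps)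
qed

lemma trigp_power: "trigp p \<Longrightarrow> trigp (\<lambda>t. p t ^ n)"
proof (induction n)
  case 0 then show ?case using trigp_const[of 1] by simp
next
  case (Suc n) then show ?case using trigp_mult[OF Suc.prems Suc.IH[OF Suc.prems]] by (simp add: mult.commute)
qed

lemma trigp_sum: "finite A \<Longrightarrow> (\<And>k. k \<in> A \<Longrightarrow> trigp (f k)) \<Longrightarrow> trigp (\<lambda>t. \<Sum>k\<in>A. f k t)"
proof (induction A rule: finite_induct)
  case empty then show ?case using trigp_const[of 0] by simp
next
  case (insert a A) then show ?case using tadd[of "f a" "\<lambda>t. \<Sum>k\<in>A. f k t"] by simp
qed

lemma trigp_z: "trigp (\<lambda>t. (1 + cos (2*pi*t)) / 2)"
proof -
  have "trigp (\<lambda>t. 1/2 + 1/2 * cos (2*pi*real (1::nat)*t))"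
    by (intro tadd tscale tcos trigp_const)
  then show ?thesis by (simp add: field_simps)
qed

lemma trigp_1z: "trigp (\<lambda>t. 1 - (1 + cos (2*pi*t)) / 2)"
proof -
  have "trigp (\<lambda>t. 1/2 + (-1/2) * cos (2*pi*real (1::nat)*t))"
    by (intro tadd tscale tcos trigp_const)
  then show ?thesis by (simp add: field_simps)
qed

lemma trigp_bernstein: "trigp (\<lambda>t. \<Sum>k\<le>n. a k * Bernstein n k ((1 + cos (2*pi*t)) / 2))"
  unfolding Bernstein_def
  by (intro trigp_sum trigp_mult trigp_power trigp_z trigp_1z trigp_const) auto

lemma trigp_integral:
  assumes D: "\<And>k. ((\<lambda>t. D t * cos (2*pi*real k*t)) has_integral 0) {0..1}"
  shows "trigp p \<Longrightarrow> ((\<lambda>t. D t * p t) has_integral 0) {0..1}"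
proof (induction rule: trigp.induct)
  case (tcos k) then show ?case by (rule D)
next
  case (tadd p q) then show ?case using has_integral_add[OF tadd.IH] by (simp add: algebra_simps)
next
  case (tscale p c) then show ?case using has_integral_mult_right[OF tscale.IH, of c] by (simp add: algebra_simps)
qed

lemma half_cos_in: "-1 \<le> c \<Longrightarrow> c \<le> 1 \<Longrightarrow> (1 + c) / 2 \<in> {0..(1::real)}"
  by auto

lemma trig_complete:
  fixes D :: "real \<Rightarrow> real"
  assumes cD: "continuous_on {0..1} D"
    and sym: "\<And>t. t \<in> {0..1} \<Longrightarrow> D (1 - t) = D t"
    and orth: "\<And>k. ((\<lambda>t. D t * cos (2*pi*real k*t)) has_integral 0) {0..1}"
    and t: "t \<in> {0..1}"
  shows "D t = 0"
proof -
  define f where "f y = D (arccos (2*y - 1) / (2*pi))" for y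
  have cf: "continuous_on {0..1} f"
  proof -
    have c1: "continuous_on {0..1} (\<lambda>y. arccos (2*y - 1) / (2*pi))"
      by (intro continuous_intros) auto
    have c2: "(\<lambda>y. arccos (2*y - 1) / (2*pi)) ` {0..1} \<subseteq> {0..1}"
    proof (rule image_subsetI)
      fix y :: real assume "y \<in> {0..1}"
      then have "0 \<le> arccos (2*y - 1)" "arccos (2*y - 1) \<le> pi" using arccos_bounded[of "2*y-1"] by auto
      then show "arccos (2*y - 1) / (2*pi) \<in> {0..1}"
        using pi_gt_zero by (auto simp: field_simps)
    qed
    show ?thesis using continuous_on_compose2[OF cD c1 c2] unfolding f_def .
  qed
  have fz: "f ((1 + cos (2*pi * s)) / 2) = D s" if s: "s \<in> {0..1}" for s
  proof (cases "s \<le> 1/2")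
    have w: "2 * ((1 + cos (2*pi * s)) / 2) - 1 = cos (2*pi * s)" by (simp add: field_simps)
    case True
    have "arccos (cos (2*pi * s)) = 2*pi * s" using True s by (intro arccos_cos) auto
    then show ?thesis unfolding f_def w by simp
  next
    case False
    have w: "2 * ((1 + cos (2*pi * s)) / 2) - 1 = cos (2*pi * s)" by (simp add: field_simps)
    have c: "cos (2*pi * s) = cos (2*pi*(1-s))"
    proof -
      have "cos (2*pi*(1-s)) = cos (- (2*pi * s) + 2*pi)" by (simp add: algebra_simps)
      then show ?thesis by simp
    qed
    have "arccos (cos (2*pi*(1-s))) = 2*pi*(1-s)" using False s by (intro arccos_cos) auto
    then have "f ((1 + cos (2*pi * s)) / 2) = D (1 - s)" unfolding f_def unfolding w unfolding c by simp
    then show ?thesis using sym[OF s] by simp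
  qed
  obtain M where M: "M > 0" "\<And>s. s \<in> {0..1} \<Longrightarrow> \<bar>D s\<bar> \<le> M"
  proof -
    have "bounded (D ` {0..1})" by (intro compact_imp_bounded compact_continuous_image cD) auto
    then obtain B where "B > 0" "\<forall>y\<in>D ` {0..1}. norm y \<le> B" by (auto simp: bounded_pos)
    then show ?thesis using that[of B] by auto
  qed
  have DD: "((\<lambda>s. D s * D s) has_integral integral {0..1} (\<lambda>s. D s * D s)) {0..1}"
    by (intro integrable_integral integrable_continuous_interval continuous_intros cD)
  have small: "\<bar>integral {0..1} (\<lambda>s. D s * D s)\<bar> \<le> M * e" if e: "e > 0" for e
  proof -
    obtain N where N: "\<And>n y. N \<le> n \<Longrightarrow> y \<in> {0..1} \<Longrightarrow>
        \<bar>f y - (\<Sum>k\<le>n. f (k/n) * Bernstein n k y)\<bar> < e"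
      using Bernstein_Weierstrass[OF cf e] by blast
    define p where "p s = (\<Sum>k\<le>N. f (k/N) * Bernstein N k ((1 + cos (2*pi * s)) / 2))" for s
    have tp: "trigp p" unfolding p_def by (rule trigp_bernstein)
    have close: "\<bar>D s - p s\<bar> < e" if s: "s \<in> {0..1}" for s
    proof -
      have "(1 + cos (2*pi * s)) / 2 \<in> {0..1}" by (rule half_cos_in) simp_all
      from N[OF order_refl this] show ?thesis unfolding p_def fz[OF s] .
    qed
    have I1: "((\<lambda>s. D s * p s) has_integral 0) {0..1}" by (rule trigp_integral[OF orth tp])
    have I2: "((\<lambda>s. D s * (D s - p s)) has_integral integral {0..1} (\<lambda>s. D s * D s)) {0..1}"
      using has_integral_diff[OF DD I1] by (simp add: algebra_simps)
    have "norm (integral {0..1} (\<lambda>s. D s * D s)) \<le> (M * e) * Henstock_Kurzweil_Integration.content {0..1::real}"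
    proof (rule has_integral_bound_real[OF _ finite.emptyI I2])
      show "0 \<le> M * e" using M e by simp
      fix s :: real assume "s \<in> {0..1} - {}"
      then have s: "s \<in> {0..1}" by simp
      have "\<bar>D s\<bar> * \<bar>D s - p s\<bar> \<le> M * e"
        using M(2)[OF s] close[OF s] by (intro mult_mono) auto
      then show "norm (D s * (D s - p s)) \<le> M * e" by (simp add: abs_mult)
    qed
    then show ?thesis by simp
  qed
  have z: "integral {0..1} (\<lambda>s. D s * D s) = 0"
  proof (rule ccontr)
    assume nz: "integral {0..1} (\<lambda>s. D s * D s) \<noteq> 0"
    define e where "e = \<bar>integral {0..1} (\<lambda>s. D s * D s)\<bar> / (2 * M)"
    have e: "e > 0" using nz M by (simp add: e_def)
    have "M * e < \<bar>integral {0..1} (\<lambda>s. D s * D s)\<bar>" using nz M by (simp add: e_def)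
    then show False using small[OF e] by simp
  qed
  have "D t * D t = 0"
    by (rule has_integral_0_cbox_imp_0[of 0 1 "\<lambda>s. D s * D s"])
       (use DD z t in \<open>auto intro!: continuous_intros cD\<close>)
  then show ?thesis by simp
qed

lemma gs_even: "gs x (- u) = gs x u" by (simp add: gs_def)

lemma Fs_summable:
  assumes x: "x > 0" and t: "t \<in> {0..1}"
  shows "summable (\<lambda>n. gs x (t + real n) + gs x (t - real n - 1))"
  by (rule summable_comparison_test[OF _ summ_2gauss[OF x]]) (use Fs_bound[OF x t] in auto)

lemma Hs_summable:
  assumes x: "x > 0"
  shows "summable (\<lambda>m. co x m * cos (2*pi*real m*t))"
  by (rule summable_comparison_test[OF _ summ_co[OF x]])
     (use co_term_bound[OF x, of 1 _ "2*pi*real _*t"] in auto)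

lemma Fs_cont: assumes x: "x > 0" shows "continuous_on {0..1} (Fs x)"
proof -
  have "uniform_limit {0..1} (\<lambda>N t. \<Sum>n<N. (gs x (t + real n) + gs x (t - real n - 1)) * 1)
            (\<lambda>t. Fs x t * 1) sequentially" by (rule Fs_uniform[OF x]) simp
  then have U: "uniform_limit {0..1} (\<lambda>N t. \<Sum>n<N. (gs x (t + real n) + gs x (t - real n - 1)))
            (Fs x) sequentially" by simp
  show ?thesis
    by (rule uniform_limit_theorem[OF _ U]) (auto simp: gs_def intro!: always_eventually continuous_intros)
qed

lemma Hs_cont: assumes x: "x > 0" shows "continuous_on {0..1} (Hs x)"
proof -
  have "uniform_limit UNIV (\<lambda>N t. \<Sum>m<N. co x m * cos (2*pi*real m*t) * 1)
            (\<lambda>t. Hs x t * 1) sequentially" by (rule Hs_uniform[OF x]) simp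
  then have U0: "uniform_limit UNIV (\<lambda>N t. \<Sum>m<N. co x m * cos (2*pi*real m*t))
            (Hs x) sequentially" by simp
  have U: "uniform_limit {0..1} (\<lambda>N t. \<Sum>m<N. co x m * cos (2*pi*real m*t))
            (Hs x) sequentially" using uniform_limit_on_subset[OF U0] by blast
  show ?thesis
    by (rule uniform_limit_theorem[OF _ U]) (auto intro!: always_eventually continuous_intros)
qed

lemma Fs_sym: "Fs x (1 - t) = Fs x t"
proof -
  have "gs x (1 - t + real n) + gs x (1 - t - real n - 1) = gs x (t + real n) + gs x (t - real n - 1)" for n
  proof -
    have "gs x (1 - t + real n) = gs x (t - real n - 1)" using gs_even[of x "t - real n - 1"] by (simp add: algebra_simps)
    moreover have "gs x (1 - t - real n - 1) = gs x (t + real n)" using gs_even[of x "t + real n"] by (simp add: algebra_simps)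
    ultimately show ?thesis by simp
  qed
  then show ?thesis unfolding Fs_def by simp
qed

lemma Hs_sym: "Hs x (1 - t) = Hs x t"
proof -
  have "cos (2*pi*real m*(1 - t)) = cos (2*pi*real m*t)" for m
  proof -
    have "cos (2*pi*real m*(1 - t)) = cos (- (2*pi*real m*t) + 2*pi*real m)" by (simp add: algebra_simps)
    also have "\<dots> = cos (2*pi*real m*t)" by (simp only: cos_shift_nat cos_minus)
    finally show ?thesis .
  qed
  then show ?thesis unfolding Hs_def by simp
qed

lemma poisson:
  assumes x: "x > 0" and t: "t \<in> {0..1}"
  shows "Fs x t = Hs x t"
proof -
  have "(\<lambda>s. Fs x s - Hs x s) t = 0"
  proof (rule trig_complete[where D="\<lambda>s. Fs x s - Hs x s"])
    show "continuous_on {0..1} (\<lambda>s. Fs x s - Hs x s)"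
      by (intro continuous_intros Fs_cont Hs_cont x)
    show "Fs x (1 - s) - Hs x (1 - s) = Fs x s - Hs x s" if "s \<in> {0..1}" for s by (simp add: Fs_sym Hs_sym)
    show "((\<lambda>s. (Fs x s - Hs x s) * cos (2*pi*real k * s)) has_integral 0) {0..1}" for k
      using has_integral_diff[OF Fs_coeff[OF x, of k] Hs_coeff[OF x, of k]] by (simp add: algebra_simps)
  qed (rule t)
  then show ?thesis by simp
qed

definition th3 :: "real \<Rightarrow> real" where
  "th3 y = (\<Sum>m. (if m = 0 then 1 else 2) * exp (- pi * (real m)^2 * y))"
definition th4 :: "real \<Rightarrow> real" where
  "th4 y = (\<Sum>m. (if m = 0 then 1 else 2) * (-1)^m * exp (- pi * (real m)^2 * y))"
definition th2 :: "real \<Rightarrow> real" where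
  "th2 y = (\<Sum>n. 2 * exp (- pi * (real n + 1/2)^2 * y))"

lemma shift_sum:
  fixes f :: "nat \<Rightarrow> real"
  assumes "summable f"
  shows "(\<Sum>n. f n + f (Suc n)) = (\<Sum>m. (if m = 0 then 1 else 2) * f m)"
proof -
  have s1: "summable (\<lambda>n. f (Suc n))" using assms by (simp add: summable_Suc_iff)
  have A: "(\<Sum>n. f n + f (Suc n)) = (\<Sum>n. f n) + (\<Sum>n. f (Suc n))"
    using suminf_add[OF assms s1] by simp
  have B: "(\<Sum>n. f (Suc n)) = (\<Sum>n. f n) - f 0" using suminf_split_head[OF assms] by simp
  have C: "(\<Sum>m. (if m = 0 then 1 else 2) * f m) = (\<Sum>m. 2 * f m - (if m = 0 then f 0 else 0))"
    by (intro suminf_cong) auto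
  have s0: "summable (\<lambda>m::nat. if m = 0 then f 0 else 0)"
    by (rule summable_finite[of "{0}"]) auto
  have D: "(\<Sum>m. 2 * f m - (if m = 0 then f 0 else 0)) = (\<Sum>m. 2 * f m) - (\<Sum>m. (if m = 0 then f 0 else 0))"
    using suminf_diff[OF summable_mult[OF assms, of 2] s0] by simp
  have E: "(\<Sum>m. (if m = 0 then f 0 else 0)) = f 0"
    using suminf_finite[of "{0}" "\<lambda>m. if m = 0 then f 0 else 0"] by simp
  show ?thesis using A B C D E suminf_mult[OF assms, of 2] by simp
qed

lemma jacobi3:
  assumes x: "x > 0"
  shows "th3 x = th3 (1/x) / sqrt x"
proof -
  have "Fs x 0 = Hs x 0" using poisson[OF x] by simp
  moreover have "Fs x 0 = th3 x"
  proof -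
    have "Fs x 0 = (\<Sum>n. exp (- pi * (real n)^2 * x) + exp (- pi * (real (Suc n))^2 * x))"
      unfolding Fs_def gs_def by (intro suminf_cong) (simp add: power2_eq_square algebra_simps)
    also have "\<dots> = th3 x"
      unfolding th3_def using summ_gauss[of "pi*x"] x
      by (intro shift_sum) (simp add: mult_ac)
    finally show ?thesis .
  qed
  moreover have "Hs x 0 = th3 (1/x) / sqrt x"
  proof -
    have "Hs x 0 = (\<Sum>m. ((if m = 0 then 1 else 2) * exp (- pi * (real m)^2 * (1/x))) * (1 / sqrt x))"
      unfolding Hs_def co_def by (intro suminf_cong) simp
    also have "\<dots> = th3 (1/x) * (1 / sqrt x)"
      unfolding th3_def
    proof (rule suminf_mult2[symmetric])
      show "summable (\<lambda>m. (if m = 0 then 1 else 2) * exp (- pi * (real m)^2 * (1/x)))"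
        by (rule summable_comparison_test[OF _ summable_mult[OF summ_gauss[of "pi/x"], of 2]])
           (use x in auto)
    qed
    finally show ?thesis by simp
  qed
  ultimately show ?thesis by simp
qed

lemma jacobi4:
  assumes x: "x > 0"
  shows "th2 x = th4 (1/x) / sqrt x"
proof -
  have "Fs x (1/2) = Hs x (1/2)" using poisson[OF x] by simp
  moreover have "Fs x (1/2) = th2 x"
  proof -
    have "gs x (1/2 - real n - 1) = gs x (1/2 + real n)" for n
      using gs_even[of x "1/2 + real n"] by (simp add: algebra_simps)
    then show ?thesis
      unfolding Fs_def th2_def gs_def by (intro suminf_cong) (simp add: algebra_simps)
  qed
  moreover have "Hs x (1/2) = th4 (1/x) / sqrt x"
  proof -
    have "cos (2*pi*real m*(1/2)) = (-1)^m" for m by (simp add: mult.commute)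
    then have "Hs x (1/2) = (\<Sum>m. ((if m = 0 then 1 else 2) * (-1)^m * exp (- pi * (real m)^2 * (1/x))) * (1 / sqrt x))"
      unfolding Hs_def co_def by (intro suminf_cong) simp
    also have "\<dots> = th4 (1/x) * (1 / sqrt x)"
      unfolding th4_def
    proof (rule suminf_mult2[symmetric])
      show "summable (\<lambda>m. (if m = 0 then 1 else 2) * (-1)^m * exp (- pi * (real m)^2 * (1/x)))"
        by (rule summable_comparison_test[OF _ summable_mult[OF summ_gauss[of "pi/x"], of 2]])
           (use x in \<open>auto simp: abs_mult\<close>)
    qed
    finally show ?thesis by simp
  qed
  ultimately show ?thesis by simp
qed

lemma int_even_sum:
  fixes f :: "int \<Rightarrow> real"
  assumes ev: "\<And>k. f (- k) = f k" and sm: "summable (\<lambda>n::nat. \<bar>f (int n)\<bar>)"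
  shows "infsum f UNIV = (\<Sum>n. (if n = 0 then 1 else 2) * f (int n))"
proof -
  have s0: "summable (\<lambda>n::nat. f (int n))" by (rule summable_rabs_cancel[OF sm])
  have s1: "summable (\<lambda>n::nat. f (int (Suc n)))" using s0 unfolding summable_Suc_iff[of "\<lambda>n. f (int n)", symmetric] .
  have sm1: "summable (\<lambda>n::nat. norm (f (int (Suc n))))"
    using sm unfolding real_norm_def summable_Suc_iff[of "\<lambda>n. \<bar>f (int n)\<bar>", symmetric] .
  have e1: "f \<circ> int = (\<lambda>n. f (int n))" by (rule ext) simp
  have e2: "f \<circ> (\<lambda>n. - int (Suc n)) = (\<lambda>n. f (int (Suc n)))" by (rule ext) (simp only: o_def ev)
  have h1: "((\<lambda>n. f (int n)) has_sum (\<Sum>n. f (int n))) UNIV"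
    by (rule norm_summable_imp_has_sum[OF _ summable_sums[OF s0]]) (simp only: real_norm_def sm)
  have h2: "((\<lambda>n. f (int (Suc n))) has_sum (\<Sum>n. f (int (Suc n)))) UNIV"
    by (rule norm_summable_imp_has_sum[OF sm1 summable_sums[OF s1]])
  have i1: "inj_on int (UNIV :: nat set)" by (simp add: inj_on_def)
  have i2: "inj_on (\<lambda>n::nat. - int (Suc n)) UNIV" by (simp add: inj_on_def)
  have H1: "(f has_sum (\<Sum>n. f (int n))) (range int)"
    using has_sum_reindex[OF i1, of f] h1 unfolding e1 by simp
  have H2: "(f has_sum (\<Sum>n. f (int (Suc n)))) (range (\<lambda>n. - int (Suc n)))"
    using has_sum_reindex[OF i2, of f] h2 unfolding e2 by simp
  have disj: "range int \<inter> range (\<lambda>n. - int (Suc n)) = {}" by auto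
  have U: "range int \<union> range (\<lambda>n. - int (Suc n)) = UNIV"
  proof (rule set_eqI, rule iffI)
    fix k :: int
    show "k \<in> range int \<union> range (\<lambda>n. - int (Suc n))"
    proof (cases "k \<ge> 0")
      case True then have "k = int (nat k)" by simp
      then show ?thesis by blast
    next
      case False then have "k = - int (Suc (nat (- k - 1)))" by simp
      then show ?thesis by blast
    qed
  qed simp
  have "(f has_sum ((\<Sum>n. f (int n)) + (\<Sum>n. f (int (Suc n))))) UNIV"
    using has_sum_Un_disjoint[OF H1 H2 disj] U by simp
  then have "infsum f UNIV = (\<Sum>n. f (int n)) + (\<Sum>n. f (int (Suc n)))" by (rule infsumI)
  also have "\<dots> = (\<Sum>n. f (int n) + f (int (Suc n)))" using suminf_add[OF s0 s1] .
  also have "\<dots> = (\<Sum>n. (if n = 0 then 1 else 2) * f (int n))"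
    using shift_sum[OF s0] by simp
  finally show ?thesis .
qed

lemma theta3_th3: assumes "x > 0" shows "theta3 x = th3 x"
proof -
  have "theta3 x = (\<Sum>n. (if n = 0 then 1 else 2) * exp (- pi * (real_of_int (int n))^2 * x))"
    unfolding theta3_def
  proof (rule int_even_sum)
    show "summable (\<lambda>n::nat. \<bar>exp (- pi * (real_of_int (int n))^2 * x)\<bar>)"
      using summ_gauss[of "pi*x"] assms by (simp add: mult_ac)
  qed simp
  then show ?thesis unfolding th3_def by simp
qed

lemma theta4_th4: assumes "x > 0" shows "theta4 x = th4 x"
proof -
  have "theta4 x = (\<Sum>n. (if n = 0 then 1 else 2) * ((-1) powi (int n) * exp (- pi * (real_of_int (int n))^2 * x)))"
    unfolding theta4_def
  proof (rule int_even_sum)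
    show "summable (\<lambda>n::nat. \<bar>(-1) powi (int n) * exp (- pi * (real_of_int (int n))^2 * x)\<bar>)"
      using summ_gauss[of "pi*x"] assms by (simp add: mult_ac abs_mult power_int_def)
    show "(-1) powi (- k) * exp (- pi * (real_of_int (- k))^2 * x) = (-1) powi k * exp (- pi * (real_of_int k)^2 * x)" for k :: int
    proof -
      have "(-1::real) powi k * (-1) powi k = 1" by simp
      then have "inverse ((-1::real) powi k) = (-1) powi k" by (rule inverse_unique)
      then show ?thesis by (simp add: power_int_minus)
    qed
  qed
  then show ?thesis unfolding th4_def by (simp add: mult_ac)
qed

definition Lf :: "real \<Rightarrow> nat \<Rightarrow> real" where "Lf a n = pi * (real n + a)^2"

lemma Lf_nonneg: "Lf a n \<ge> 0" by (simp add: Lf_def)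

lemma summ_L_aux:
  assumes y: "y > 0" and a: "a \<ge> 0"
  shows "summable (\<lambda>n::nat. (pi * (real n + a)^2)^k * exp (- (pi * (real n + a)^2) * y))"
proof (rule summable_comparison_test_bigo)
  show "summable (\<lambda>n::nat. norm (1 / real n ^ 2))"
    using inverse_power_summable[of 2] by (simp add: divide_inverse)
  show "(\<lambda>n::nat. (pi * (real n + a)^2)^k * exp (- (pi * (real n + a)^2) * y)) \<in> O(\<lambda>n. 1 / real n ^ 2)"
    using y a by real_asymp
qed

lemma summ_L:
  assumes y: "y > 0" and a: "a \<ge> 0"
  shows "summable (\<lambda>n::nat. Lf a n ^ k * exp (- Lf a n * y))"
  using summ_L_aux[OF y a] unfolding Lf_def .

definition gser :: "(nat \<Rightarrow> real) \<Rightarrow> real \<Rightarrow> nat \<Rightarrow> real \<Rightarrow> real" where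
  "gser c a k y = (\<Sum>n. c n * Lf a n ^ k * exp (- Lf a n * y))"

lemma gser_summable:
  assumes y: "y > 0" and a: "a \<ge> 0" and c: "\<And>n. \<bar>c n\<bar> \<le> 2"
  shows "summable (\<lambda>n. c n * Lf a n ^ k * exp (- Lf a n * y))"
proof (rule summable_comparison_test[OF _ summable_mult[OF summ_L[OF y a, of k], of 2]])
  show "\<exists>N. \<forall>n\<ge>N. norm (c n * Lf a n ^ k * exp (- Lf a n * y)) \<le> 2 * (Lf a n ^ k * exp (- Lf a n * y))"
  proof (intro exI allI impI)
    fix n :: nat
    have "\<bar>c n\<bar> * (Lf a n ^ k * exp (- Lf a n * y)) \<le> 2 * (Lf a n ^ k * exp (- Lf a n * y))"
      by (intro mult_right_mono c) (simp add: Lf_nonneg)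
    then show "norm (c n * Lf a n ^ k * exp (- Lf a n * y)) \<le> 2 * (Lf a n ^ k * exp (- Lf a n * y))"
      by (simp add: abs_mult Lf_nonneg mult.assoc)
  qed
qed

lemma gser_deriv:
  assumes y: "y > 0" and a: "a \<ge> 0" and c: "\<And>n. \<bar>c n\<bar> \<le> 2"
  shows "(gser c a k has_real_derivative gser (\<lambda>n. - c n) a (Suc k) y) (at y)"
proof -
  define S where "S = {y/2<..}"
  have cS: "convex S" unfolding S_def by simp
  have yS: "y \<in> interior S" unfolding S_def using y by (subst interior_open) auto
  have fd: "\<And>n z. z \<in> S \<Longrightarrow> ((\<lambda>z. c n * Lf a n ^ k * exp (- Lf a n * z)) has_field_derivative
        (- c n * Lf a n ^ Suc k * exp (- Lf a n * z))) (at z within S)"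
    by (auto intro!: derivative_eq_intros simp: algebra_simps)
  have uc: "uniformly_convergent_on S (\<lambda>N z. \<Sum>n<N. - c n * Lf a n ^ Suc k * exp (- Lf a n * z))"
  proof (rule Weierstrass_m_test'[OF _ summable_mult[OF summ_L[of "y/2" a "Suc k"], of 2]])
    fix n z assume z: "z \<in> S"
    then have zz: "z \<ge> y/2" by (simp add: S_def)
    have "exp (- Lf a n * z) \<le> exp (- Lf a n * (y/2))"
    proof -
      have "Lf a n * (y/2) \<le> Lf a n * z" using zz Lf_nonneg[of a n] by (rule mult_left_mono)
      then show ?thesis by simp
    qed
    then have "\<bar>c n\<bar> * (Lf a n ^ Suc k * exp (- Lf a n * z)) \<le> 2 * (Lf a n ^ Suc k * exp (- Lf a n * (y/2)))"
      by (intro mult_mono c mult_left_mono) (auto simp: Lf_nonneg)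
    then show "norm (- c n * Lf a n ^ Suc k * exp (- Lf a n * z)) \<le> 2 * (Lf a n ^ Suc k * exp (- Lf a n * (y/2)))"
      by (simp add: abs_mult Lf_nonneg mult.assoc)
  qed (use y a in auto)
  have "((\<lambda>z. \<Sum>n. c n * Lf a n ^ k * exp (- Lf a n * z)) has_field_derivative
         (\<Sum>n. - c n * Lf a n ^ Suc k * exp (- Lf a n * y))) (at y)"
    by (rule has_field_derivative_series'(2)[OF cS fd uc _ gser_summable[OF y a c] yS])
       (use y in \<open>auto simp: S_def\<close>)
  then show ?thesis unfolding gser_def[abs_def] by simp
qed

lemma strict_conv:
  fixes G G' :: "real \<Rightarrow> real"
  assumes D: "\<And>u. (G has_real_derivative G' u) (at u)" and M: "strict_mono G'"
    and t: "t \<noteq> 0"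
  shows "2 * G u < G (u + t) + G (u - t)"
proof -
  have main: "2 * G u < G (u + s) + G (u - s)" if s: "s > 0" for s
  proof -
    obtain z1 where z1: "u < z1" "z1 < u + s" "G (u + s) - G u = (u + s - u) * G' z1"
      using MVT2[of u "u+s" G G'] s D by auto
    obtain z2 where z2: "u - s < z2" "z2 < u" "G u - G (u - s) = (u - (u - s)) * G' z2"
      using MVT2[of "u-s" u G G'] s D by auto
    have "G' z2 < G' z1" using M z1 z2 by (simp add: strict_mono_def)
    then have "s * G' z2 < s * G' z1" using s by simp
    then show ?thesis using z1(3) z2(3) by simp
  qed
  show ?thesis
  proof (cases "t > 0")
    case True then show ?thesis by (rule main)
  next
    case False then have "- t > 0" using t by simp
    from main[OF this] show ?thesis by simp
  qed
qed

lemma gser_pos_deriv_comp: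
  assumes a: "a \<ge> 0" and c: "\<And>n. \<bar>c n\<bar> \<le> 2"
  shows "((\<lambda>u. gser c a k (exp u)) has_real_derivative gser (\<lambda>n. - c n) a (Suc k) (exp u) * exp u) (at u)"
  using DERIV_chain2[OF gser_deriv[OF exp_gt_zero a c] DERIV_exp] .

lemma neg_neg_c: "(\<lambda>n. - (- (c :: nat \<Rightarrow> real) n)) = c" by (rule ext) simp

definition KK :: "(nat \<Rightarrow> real) \<Rightarrow> real \<Rightarrow> real \<Rightarrow> real" where
  "KK c a x = (x * gser (\<lambda>n. - c n) a 1 x + x^2 * gser c a 2 x) * gser c a 0 x - (x * gser (\<lambda>n. - c n) a 1 x)^2"

definition GG :: "(nat \<Rightarrow> real) \<Rightarrow> real \<Rightarrow> real \<Rightarrow> real" where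
  "GG c a u = ln (gser c a 0 (exp u))"

definition QQ :: "(nat \<Rightarrow> real) \<Rightarrow> real \<Rightarrow> real \<Rightarrow> real" where
  "QQ c a u = exp u * gser (\<lambda>n. - c n) a 1 (exp u) / gser c a 0 (exp u)"

lemma GG_deriv:
  assumes a: "a \<ge> 0" and c: "\<And>n. \<bar>c n\<bar> \<le> 2" and pos: "gser c a 0 (exp u) > 0"
  shows "(GG c a has_real_derivative QQ c a u) (at u)"
proof -
  have "((\<lambda>u. ln (gser c a 0 (exp u))) has_real_derivative
          (1 / gser c a 0 (exp u)) * (gser (\<lambda>n. - c n) a (Suc 0) (exp u) * exp u)) (at u)"
    by (rule DERIV_chain2[OF DERIV_ln_divide[OF pos] gser_pos_deriv_comp[OF a c]])
  then show ?thesis unfolding GG_def[abs_def] QQ_def by (simp add: field_simps)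
qed

lemma QQ_deriv:
  assumes a: "a \<ge> 0" and c: "\<And>n. \<bar>c n\<bar> \<le> 2" and pos: "gser c a 0 (exp u) > 0"
  shows "(QQ c a has_real_derivative KK c a (exp u) / (gser c a 0 (exp u))^2) (at u)"
proof -
  have c': "\<And>n. \<bar>- c n\<bar> \<le> 2" using c by simp
  have d0: "((\<lambda>u. gser c a 0 (exp u)) has_real_derivative gser (\<lambda>n. - c n) a 1 (exp u) * exp u) (at u)"
    using gser_pos_deriv_comp[OF a c, where k=0] by simp
  have d1: "((\<lambda>u. gser (\<lambda>n. - c n) a 1 (exp u)) has_real_derivative gser c a 2 (exp u) * exp u) (at u)"
    using gser_pos_deriv_comp[OF a c', where k=1] by (simp add: numeral_2_eq_2 neg_neg_c)
  have nz: "gser c a 0 (exp u) \<noteq> 0" using pos by simp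
  note D = DERIV_divide[OF DERIV_mult[OF DERIV_exp d1] d0 nz]
  show ?thesis unfolding QQ_def[abs_def]
    by (rule DERIV_cong[OF D]) (simp add: KK_def power2_eq_square algebra_simps)
qed

lemma QQ_increasing:
  assumes a: "a \<ge> 0" and c: "\<And>n. \<bar>c n\<bar> \<le> 2" and pos: "\<And>x. x > 0 \<Longrightarrow> gser c a 0 x > 0"
    and K: "\<And>x. exp u0 \<le> x \<Longrightarrow> KK c a x > 0"
    and uv: "u0 \<le> u" "u < v"
  shows "QQ c a u < QQ c a v"
proof (rule DERIV_pos_imp_increasing_open[OF uv(2)])
  fix w assume w: "u < w" "w < v"
  have "exp u0 \<le> exp w" using uv w by simp
  then have "KK c a (exp w) / (gser c a 0 (exp w))^2 > 0"
    using K pos[of "exp w"] by simp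
  then show "\<exists>y. DERIV (QQ c a) w :> y \<and> 0 < y" using QQ_deriv[OF a c pos[OF exp_gt_zero]] by blast
next
  show "continuous_on {u..v} (QQ c a)"
    using QQ_deriv[OF a c pos[OF exp_gt_zero]]
    by (intro continuous_at_imp_continuous_on ballI DERIV_isCont) blast
qed

lemma QQ_decreasing:
  assumes a: "a \<ge> 0" and c: "\<And>n. \<bar>c n\<bar> \<le> 2" and pos: "\<And>x. x > 0 \<Longrightarrow> gser c a 0 x > 0"
    and K: "\<And>x. exp u0 \<le> x \<Longrightarrow> KK c a x < 0"
    and uv: "u0 \<le> u" "u < v"
  shows "QQ c a v < QQ c a u"
proof -
  have "(\<lambda>w. - QQ c a w) u < (\<lambda>w. - QQ c a w) v"
  proof (rule DERIV_pos_imp_increasing_open[OF uv(2)])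
    fix w assume w: "u < w" "w < v"
    have "exp u0 \<le> exp w" using uv w by simp
    then have "- (KK c a (exp w) / (gser c a 0 (exp w))^2) > 0"
      using K pos[of "exp w"] by (simp add: divide_neg_pos)
    then show "\<exists>y. DERIV (\<lambda>w. - QQ c a w) w :> y \<and> 0 < y"
      using DERIV_minus[OF QQ_deriv[OF a c pos[OF exp_gt_zero]]] by blast
  next
    show "continuous_on {u..v} (\<lambda>w. - QQ c a w)"
      using QQ_deriv[OF a c pos[OF exp_gt_zero]]
      by (intro continuous_at_imp_continuous_on ballI continuous_intros DERIV_isCont) blast
  qed
  then show ?thesis by simp
qed

lemma KK_form:
  assumes x: "x > 0" and a: "a \<ge> 0" and c: "\<And>n. \<bar>c n\<bar> \<le> 2"
  shows "KK c a x = (\<Sum>n. c n * ((Lf a n * x)^2 - Lf a n * x) * exp (- Lf a n * x)) *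
                    (\<Sum>n. c n * exp (- Lf a n * x))
                  - (\<Sum>n. c n * (Lf a n * x) * exp (- Lf a n * x))^2"
proof -
  have s0: "summable (\<lambda>n. c n * Lf a n ^ 0 * exp (- Lf a n * x))" by (rule gser_summable[OF x a c])
  have s1: "summable (\<lambda>n. c n * Lf a n ^ 1 * exp (- Lf a n * x))" by (rule gser_summable[OF x a c])
  have s2: "summable (\<lambda>n. c n * Lf a n ^ 2 * exp (- Lf a n * x))" by (rule gser_summable[OF x a c])
  have t1: "summable (\<lambda>n. c n * (Lf a n * x) * exp (- Lf a n * x))"
  proof -
    have "(\<lambda>n. c n * (Lf a n * x) * exp (- Lf a n * x)) = (\<lambda>n. c n * Lf a n ^ 1 * exp (- Lf a n * x) * x)"
      by (rule ext) (simp add: mult_ac)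
    then show ?thesis using summable_mult2[OF s1, of x] by metis
  qed
  have t2: "summable (\<lambda>n. c n * (Lf a n * x)^2 * exp (- Lf a n * x))"
  proof -
    have "(\<lambda>n. c n * (Lf a n * x)^2 * exp (- Lf a n * x)) = (\<lambda>n. c n * Lf a n ^ 2 * exp (- Lf a n * x) * x^2)"
      by (rule ext) (simp add: mult_ac power_mult_distrib)
    then show ?thesis using summable_mult2[OF s2, of "x^2"] by metis
  qed
  have g0: "gser c a 0 x = (\<Sum>n. c n * exp (- Lf a n * x))" by (simp add: gser_def)
  have g1: "x * gser (\<lambda>n. - c n) a 1 x = - (\<Sum>n. c n * (Lf a n * x) * exp (- Lf a n * x))"
  proof -
    have "x * gser (\<lambda>n. - c n) a 1 x = (\<Sum>n. x * (- c n * Lf a n ^ 1 * exp (- Lf a n * x)))"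
      unfolding gser_def by (rule suminf_mult[symmetric]) (use summable_minus[OF s1] in simp)
    also have "\<dots> = (\<Sum>n. - (c n * (Lf a n * x) * exp (- Lf a n * x)))"
      by (simp add: mult_ac)
    also have "\<dots> = - (\<Sum>n. c n * (Lf a n * x) * exp (- Lf a n * x))"
      by (rule suminf_minus[OF t1])
    finally show ?thesis .
  qed
  have g2: "x^2 * gser c a 2 x = (\<Sum>n. c n * (Lf a n * x)^2 * exp (- Lf a n * x))"
  proof -
    have "x^2 * gser c a 2 x = (\<Sum>n. x^2 * (c n * Lf a n ^ 2 * exp (- Lf a n * x)))"
      unfolding gser_def by (rule suminf_mult[symmetric]) (rule s2)
    also have "\<dots> = (\<Sum>n. c n * (Lf a n * x)^2 * exp (- Lf a n * x))"
      by (simp add: mult_ac power_mult_distrib)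
    finally show ?thesis .
  qed
  have g12: "- (\<Sum>n. c n * (Lf a n * x) * exp (- Lf a n * x)) + (\<Sum>n. c n * (Lf a n * x)^2 * exp (- Lf a n * x))
      = (\<Sum>n. c n * ((Lf a n * x)^2 - Lf a n * x) * exp (- Lf a n * x))"
  proof -
    have "(\<Sum>n. c n * (Lf a n * x)^2 * exp (- Lf a n * x)) - (\<Sum>n. c n * (Lf a n * x) * exp (- Lf a n * x))
       = (\<Sum>n. c n * (Lf a n * x)^2 * exp (- Lf a n * x) - c n * (Lf a n * x) * exp (- Lf a n * x))"
      by (rule suminf_diff[OF t2 t1])
    also have "\<dots> = (\<Sum>n. c n * ((Lf a n * x)^2 - Lf a n * x) * exp (- Lf a n * x))"
      by (simp add: algebra_simps)
    finally show ?thesis by simp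
  qed
  show ?thesis unfolding KK_def g1 g2 g0 g12[symmetric] by (simp add: power2_eq_square)
qed

lemma exp_lower_sum:
  fixes z :: real
  assumes "z \<ge> 0"
  shows "(\<Sum>i<n. z^i / fact i) \<le> exp z"
proof -
  have e: "(\<lambda>n. z ^ n /\<^sub>R fact n) = (\<lambda>i. z^i / fact i)" by (rule ext) (simp add: field_simps)
  have "(\<lambda>i. z^i / fact i) sums exp z" using exp_converges[of z] unfolding e .
  then have "(\<Sum>i\<in>{..<n}. z^i / fact i) \<le> (\<Sum>i. z^i / fact i)"
    by (intro sum_le_suminf) (use assms in \<open>auto simp: sums_iff\<close>)
  then show ?thesis using \<open>(\<lambda>i. z^i / fact i) sums exp z\<close> by (simp add: sums_iff)
qed

lemma exp_lower_cube: "(z::real) \<ge> 0 \<Longrightarrow> z^3 / 6 \<le> exp z"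
proof -
  assume z: "z \<ge> 0"
  have "(\<Sum>i<4. z^i / fact i) \<le> exp z" by (rule exp_lower_sum[OF z])
  moreover have "(\<Sum>i<4. z^i / fact i) = 1 + z + z^2/2 + z^3/6"
    by (simp add: eval_nat_numeral fact_numeral)
  moreover have "0 \<le> 1 + z + z^2/2" using z by simp
  ultimately show ?thesis by linarith
qed

lemma exp_lower_3: "(z::real) \<ge> 0 \<Longrightarrow> 1 + z + z^2/2 + z^3/6 \<le> exp z"
proof -
  assume z: "z \<ge> 0"
  have "(\<Sum>i<4. z^i / fact i) \<le> exp z" by (rule exp_lower_sum[OF z])
  moreover have "(\<Sum>i<4. z^i / fact i) = 1 + z + z^2/2 + z^3/6"
    by (simp add: eval_nat_numeral fact_numeral)
  ultimately show ?thesis by linarith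
qed

lemma scaled_summable:
  assumes x: "x > 0" and a: "a \<ge> 0" and c: "\<And>n. \<bar>c n\<bar> \<le> 2"
  shows "summable (\<lambda>n. c n * (Lf a n * x)^k * exp (- Lf a n * x))"
proof -
  have "(\<lambda>n. c n * (Lf a n * x)^k * exp (- Lf a n * x)) = (\<lambda>n. c n * Lf a n ^ k * exp (- Lf a n * x) * x^k)"
    by (rule ext) (simp add: mult_ac power_mult_distrib)
  moreover have s: "summable (\<lambda>n. c n * Lf a n ^ k * exp (- Lf a n * x))" by (rule gser_summable[OF x a c])
  ultimately show ?thesis using summable_mult2[OF s, of "x^k"] by metis
qed

lemma scaled_summable1:
  assumes x: "x > 0" and a: "a \<ge> 0" and c: "\<And>n. \<bar>c n\<bar> \<le> 2"
  shows "summable (\<lambda>n. c n * (Lf a n * x) * exp (- Lf a n * x))"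
  using scaled_summable[OF x a c, where k=1] by simp

lemma scaled_summable0:
  assumes x: "x > 0" and a: "a \<ge> 0" and c: "\<And>n. \<bar>c n\<bar> \<le> 2"
  shows "summable (\<lambda>n. c n * exp (- Lf a n * x))"
  using scaled_summable[OF x a c, where k=0] by simp

lemma scaled_summableR:
  assumes x: "x > 0" and a: "a \<ge> 0" and c: "\<And>n. \<bar>c n\<bar> \<le> 2"
  shows "summable (\<lambda>n. c n * ((Lf a n * x)^2 - Lf a n * x) * exp (- Lf a n * x))"
proof -
  have "summable (\<lambda>n. c n * (Lf a n * x)^2 * exp (- Lf a n * x) - c n * (Lf a n * x) * exp (- Lf a n * x))"
    by (intro summable_diff scaled_summable[OF x a c] scaled_summable1[OF x a c])
  then show ?thesis by (simp add: algebra_simps)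
qed

definition c3 :: "nat \<Rightarrow> real" where "c3 n = (if n = 0 then 1 else 2)"

lemma c3_bound: "\<bar>c3 n\<bar> \<le> 2" by (simp add: c3_def)
lemma c3_pos: "c3 n > 0" by (simp add: c3_def)

lemma exp32: "4 \<le> exp (3/2 :: real)"
proof -
  have "1 + 3/2 + (3/2)^2/2 + (3/2)^3/6 \<le> exp (3/2 :: real)" by (rule exp_lower_3) simp
  then show ?thesis by (simp add: power_divide)
qed

lemma a_le_exp: "(t::real) \<ge> 0 \<Longrightarrow> t * exp (- t) \<le> 2 * exp (- t / 2)"
proof -
  assume t: "t \<ge> 0"
  have "1 + t/2 \<le> exp (t/2)" by (rule exp_ge_add_one_self)
  then have "t \<le> 2 * exp (t/2)" by linarith
  then have "t * exp (- t) \<le> 2 * exp (t/2) * exp (- t)" by (intro mult_right_mono) auto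
  also have "2 * exp (t/2) * exp (- t) = 2 * exp (- t / 2)"
    by (simp add: mult.assoc exp_add[symmetric])
  finally show ?thesis .
qed

lemma KK3_pos:
  assumes x: "x \<ge> 1"
  shows "KK c3 0 x > 0"
proof -
  have x0: "x > 0" using x by simp
  note sm = scaled_summable[OF x0 order_refl c3_bound]
  define e where "e n = exp (- Lf 0 n * x)" for n
  define t where "t n = Lf 0 n * x" for n
  have et: "e n = exp (- t n)" for n by (simp add: e_def t_def)
  have t0: "t 0 = 0" by (simp add: t_def Lf_def)
  have tn: "t n \<ge> pi * real n" for n
  proof -
    have "real n \<le> real n ^ 2" by (cases n) (auto simp: power2_eq_square)
    then have "pi * real n \<le> pi * real n ^ 2" by simp
    also have "\<dots> = pi * real n ^ 2 * 1" by simp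
    also have "\<dots> \<le> pi * real n ^ 2 * x" by (rule mult_left_mono) (use x in auto)
    finally show ?thesis by (simp add: t_def Lf_def)
  qed
  have tnn: "t n \<ge> 0" for n unfolding t_def using Lf_nonneg[of 0 n] x0 by simp
  define S where "S = (\<Sum>n. c3 n * e n)"
  define A where "A = (\<Sum>n. c3 n * t n * e n)"
  define R where "R = (\<Sum>n. c3 n * ((t n)^2 - t n) * e n)"
  have sS: "summable (\<lambda>n. c3 n * e n)" unfolding e_def by (rule scaled_summable0[OF x0 order_refl c3_bound])
  have sA: "summable (\<lambda>n. c3 n * t n * e n)" unfolding e_def t_def by (rule scaled_summable1[OF x0 order_refl c3_bound])
  have sR: "summable (\<lambda>n. c3 n * ((t n)^2 - t n) * e n)" unfolding e_def t_def by (rule scaled_summableR[OF x0 order_refl c3_bound])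
  have KK: "KK c3 0 x = R * S - A^2"
    unfolding KK_form[OF x0 order_refl c3_bound] R_def S_def A_def e_def t_def ..
  have S1: "S \<ge> 1"
  proof -
    have "sum (\<lambda>n. c3 n * e n) {0} \<le> S" unfolding S_def
      by (rule sum_le_suminf[OF sS]) (auto simp: e_def intro!: mult_nonneg_nonneg less_imp_le[OF c3_pos])
    then show ?thesis by (simp add: c3_def e_def Lf_def)
  qed
  have Apos: "A > 0" unfolding A_def
    by (rule suminf_pos2[OF sA, where i=1]) (use x0 in \<open>auto simp: c3_def e_def t_def Lf_def intro!: mult_nonneg_nonneg\<close>)
  have Rge: "R \<ge> (pi - 1) * A"
  proof -
    have "(pi - 1) * A = (\<Sum>n. (pi - 1) * (c3 n * t n * e n))" unfolding A_def by (rule suminf_mult[symmetric, OF sA])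
    also have "\<dots> \<le> R" unfolding R_def
    proof (rule suminf_le[OF _ summable_mult[OF sA] sR])
      fix n
      have "t n = 0 \<or> t n \<ge> pi"
      proof (cases n)
        case 0 then show ?thesis by (simp add: t0)
      next
        case (Suc m)
        then have "pi * 1 \<le> pi * real n" by (intro mult_left_mono) auto
        then have "pi \<le> t n" using tn[of n] by linarith
        then show ?thesis by simp
      qed
      then have "pi * t n \<le> t n * t n" using tnn[of n] by (auto intro: mult_right_mono)
      then have "(pi - 1) * t n \<le> (t n)^2 - t n" by (simp add: power2_eq_square algebra_simps)
      moreover have "c3 n * e n \<ge> 0" using c3_pos[of n] by (simp add: e_def)
      ultimately have "(c3 n * e n) * ((pi - 1) * t n) \<le> (c3 n * e n) * ((t n)^2 - t n)"
        by (intro mult_left_mono)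
      then show "(pi - 1) * (c3 n * t n * e n) \<le> c3 n * ((t n)^2 - t n) * e n" by (simp add: mult_ac)
    qed
    finally show ?thesis .
  qed
  have Alt: "A < pi - 1"
  proof -
    define q :: real where "q = exp (- 3/2)"
    have q: "0 < q" "q < 1" by (auto simp: q_def)
    have "A = (\<Sum>n. c3 (Suc n) * t (Suc n) * e (Suc n))"
      using suminf_split_head[OF sA] by (simp add: A_def t0)
    also have "\<dots> \<le> (\<Sum>n. 4 * q * q^n)"
    proof (rule suminf_le)
      show "summable (\<lambda>n. c3 (Suc n) * t (Suc n) * e (Suc n))"
        using sA unfolding summable_Suc_iff[of "\<lambda>n. c3 n * t n * e n", symmetric] .
      show "summable (\<lambda>n. 4 * q * q ^ n)" using q by (intro summable_mult) simp
      fix n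
      have "t (Suc n) * e (Suc n) \<le> 2 * exp (- t (Suc n) / 2)" unfolding et by (rule a_le_exp[OF tnn])
      also have "exp (- t (Suc n) / 2) \<le> exp (- (3/2) * real (Suc n))"
      proof -
        have "3 * real (Suc n) \<le> pi * real (Suc n)" using pi_gt3 by (intro mult_right_mono) auto
        then show ?thesis using tn[of "Suc n"] by simp
      qed
      also have "exp (- (3/2) * real (Suc n)) = q * q^n"
      proof -
        have "q * q^n = q ^ Suc n" by simp
        also have "\<dots> = exp (real (Suc n) * (- 3/2))" unfolding q_def by (rule exp_of_nat_mult[symmetric])
        finally show ?thesis by (simp add: mult.commute)
      qed
      finally have "t (Suc n) * e (Suc n) \<le> 2 * (q * q^n)" by simp
      then show "c3 (Suc n) * t (Suc n) * e (Suc n) \<le> 4 * q * q^n" by (simp add: c3_def mult_ac)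
    qed
    also have "\<dots> = 4 * q / (1 - q)"
      using suminf_mult[of "\<lambda>n. q^n" "4*q"] suminf_geometric[of q] q by simp
    also have "\<dots> < pi - 1"
    proof -
      have "q = inverse (exp (3/2))" by (simp add: q_def exp_minus)
      also have "\<dots> \<le> inverse 4" by (rule le_imp_inverse_le[OF exp32]) simp
      finally have q4: "q \<le> 1/4" by simp
      have "4 * q / (1 - q) \<le> 2"
        using q4 q by (simp add: field_simps)
      then show ?thesis using pi_gt3 by simp
    qed
    finally show ?thesis .
  qed
  have "R * S \<ge> (pi - 1) * A" 
  proof -
    have "(pi - 1) * A \<ge> 0" using Apos pi_gt3 by simp
    then have "R \<ge> 0" using Rge by linarith
    then have "R * 1 \<le> R * S" using S1 by (intro mult_left_mono)
    then show ?thesis using Rge by simp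
  qed
  moreover have "(pi - 1) * A - A^2 > 0"
  proof -
    have "(pi - 1) * A - A^2 = A * (pi - 1 - A)" by (simp add: power2_eq_square algebra_simps)
    then show ?thesis using Apos Alt by simp
  qed
  ultimately show ?thesis unfolding KK by simp
qed

definition c4 :: "nat \<Rightarrow> real" where "c4 n = (if n = 0 then 1 else 2) * (-1)^n"

lemma c4_bound: "\<bar>c4 n\<bar> \<le> 2" by (simp add: c4_def abs_mult)

definition hf :: "real \<Rightarrow> real" where "hf s = (s^2 - s) * exp (- s)"

lemma hf_decr:
  assumes "27/10 \<le> s1" "s1 < s2"
  shows "hf s2 < hf s1"
proof -
  have "(\<lambda>s. - hf s) s1 < (\<lambda>s. - hf s) s2"
  proof (rule DERIV_pos_imp_increasing_open[OF assms(2)])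
    fix s assume s: "s1 < s" "s < s2"
    have d: "((\<lambda>s. - hf s) has_real_derivative ((s^2 - 3 * s + 1) * exp (- s))) (at s)"
      unfolding hf_def by (auto intro!: derivative_eq_intros simp: algebra_simps power2_eq_square)
    have "s > 27/10" using s assms by simp
    then have "(s - 3/2)^2 > (6/5)^2" by (intro power_strict_mono) auto
    then have "s^2 - 3 * s + 1 > 0" by (simp add: power2_eq_square algebra_simps)
    then show "\<exists>y. ((\<lambda>s. - hf s) has_real_derivative y) (at s) \<and> 0 < y" using d by auto
  next
    show "continuous_on {s1..s2} (\<lambda>s. - hf s)" unfolding hf_def by (intro continuous_intros)
  qed
  then show ?thesis by simp
qed

lemma KK4_neg:
  assumes x: "x \<ge> 7/8" and Spos: "gser c4 0 0 x > 0"
  shows "KK c4 0 x < 0"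
proof -
  have x0: "x > 0" using x by simp
  define e where "e n = exp (- Lf 0 n * x)" for n
  define t where "t n = Lf 0 n * x" for n
  have et: "e n = exp (- t n)" for n by (simp add: e_def t_def)
  have t0: "t 0 = 0" by (simp add: t_def Lf_def)
  have tS: "t (Suc n) = pi * x * (real n + 1)^2" for n by (simp add: t_def Lf_def)
  have t1: "t (Suc n) \<ge> 27/10" for n
  proof -
    have "pi * x \<ge> 27/10"
    proof -
      have "pi * x \<ge> 3.14 * (7/8)" using pi_approx(1) x by (intro mult_mono) auto
      then show ?thesis by simp
    qed
    moreover have "(real n + 1)^2 \<ge> 1" by simp
    then have "pi * x * 1 \<le> pi * x * (real n + 1)^2" using x0 by (intro mult_left_mono) auto
    ultimately show ?thesis unfolding tS[of n] by linarith
  qed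
  have tinc: "t (Suc n) < t (Suc (Suc n))" for n
  proof -
    have "(real n + 1)^2 < (real (Suc n) + 1)^2" by (intro power_strict_mono) auto
    then show ?thesis unfolding tS using x0 by simp
  qed
  define S where "S = (\<Sum>n. c4 n * e n)"
  define A where "A = (\<Sum>n. c4 n * t n * e n)"
  define R where "R = (\<Sum>n. c4 n * ((t n)^2 - t n) * e n)"
  have sR: "summable (\<lambda>n. c4 n * ((t n)^2 - t n) * e n)" unfolding e_def t_def by (rule scaled_summableR[OF x0 order_refl c4_bound])
  have KK: "KK c4 0 x = R * S - A^2"
    unfolding KK_form[OF x0 order_refl c4_bound] R_def S_def A_def e_def t_def ..
  have S0: "S > 0" using Spos unfolding S_def gser_def e_def by simp
  define b where "b n = hf (t (Suc n))" for n
  have bdec: "b (Suc n) < b n" for n unfolding b_def by (rule hf_decr[OF t1 tinc])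
  have bnn: "b n \<ge> 0" for n
  proof -
    have "t (Suc n) \<ge> 1" using t1[of n] by simp
    then have "(t (Suc n))^2 - t (Suc n) \<ge> 0" by (simp add: power2_eq_square)
    then show ?thesis unfolding b_def hf_def by simp
  qed
  have fS: "c4 (Suc n) * ((t (Suc n))^2 - t (Suc n)) * e (Suc n) = -2 * ((-1)^n * b n)" for n
    by (simp add: c4_def b_def hf_def et)
  have sR1: "summable (\<lambda>n. c4 (Suc n) * ((t (Suc n))^2 - t (Suc n)) * e (Suc n))"
    using sR unfolding summable_Suc_iff[of "\<lambda>n. c4 n * ((t n)^2 - t n) * e n", symmetric] .
  have sb: "summable (\<lambda>n. (-1)^n * b n)"
  proof -
    have "summable (\<lambda>n. (-1/2) * (c4 (Suc n) * ((t (Suc n))^2 - t (Suc n)) * e (Suc n)))"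
      by (rule summable_mult[OF sR1])
    then show ?thesis unfolding fS by simp
  qed
  have b0: "b \<longlonglongrightarrow> 0"
  proof -
    have "(\<lambda>n. (-1)^n * b n) \<longlonglongrightarrow> 0" by (rule summable_LIMSEQ_zero[OF sb])
    then have "(\<lambda>n. \<bar>(-1)^n * b n\<bar>) \<longlonglongrightarrow> 0" by (rule tendsto_rabs_zero)
    then show ?thesis using bnn by (simp add: abs_mult)
  qed
  have R1: "R = -2 * (\<Sum>n. (-1)^n * b n)"
  proof -
    have "R = (\<Sum>n. c4 (Suc n) * ((t (Suc n))^2 - t (Suc n)) * e (Suc n))"
      using suminf_split_head[OF sR] by (simp add: R_def t0)
    also have "\<dots> = (\<Sum>n. -2 * ((-1)^n * b n))" unfolding fS ..
    also have "\<dots> = -2 * (\<Sum>n. (-1)^n * b n)" by (rule suminf_mult[OF sb])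
    finally show ?thesis .
  qed
  have "(\<Sum>i<2*1. (-1)^i * b i) \<le> (\<Sum>i. (-1)^i * b i)"
    by (rule summable_Leibniz'(2)[OF b0 bnn less_imp_le[OF bdec]])
  moreover have "(\<Sum>i<2*1. (-1)^i * b i) = b 0 - b 1" by (simp add: numeral_2_eq_2)
  moreover have "b 1 < b 0" using bdec[of 0] by simp
  ultimately have "(\<Sum>i. (-1)^i * b i) > 0" by linarith
  then have "R < 0" using R1 by simp
  then have "R * S < 0" using S0 by (simp add: mult_neg_pos)
  then show ?thesis unfolding KK by (smt (verit) zero_le_power2)
qed

definition c2 :: "nat \<Rightarrow> real" where "c2 n = 2"
lemma c2_bound: "\<bar>c2 n\<bar> \<le> 2" by (simp add: c2_def)
definition c1 :: "nat \<Rightarrow> real" where "c1 n = 1"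
lemma c1_bound: "\<bar>c1 n\<bar> \<le> 2" by (simp add: c1_def)

lemma exp35: "16 \<le> exp (7/2 :: real)"
proof -
  have "1 + 7/2 + (7/2)^2/2 + (7/2)^3/6 \<le> exp (7/2 :: real)" by (rule exp_lower_3) simp
  then show ?thesis by (simp add: power_divide)
qed

lemma beta_bound:
  fixes b :: real assumes b: "b \<ge> 7"
  shows "b^2 * exp (- b) \<le> 7 * exp (- b / 2)"
proof -
  have "(b/2)^3 / 6 \<le> exp (b/2)" by (rule exp_lower_cube) (use b in simp)
  then have c: "b^3 \<le> 48 * exp (b/2)" by (simp add: power_divide)
  have "7 * b^2 \<le> b * b^2" using b by (intro mult_right_mono) auto
  also have "b * b^2 = b^3" by (simp add: power3_eq_cube power2_eq_square)
  finally have "7 * b^2 \<le> 48 * exp (b/2)" using c by linarith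
  then have "b^2 \<le> 7 * exp (b/2)" using exp_gt_zero[of "b/2"] by linarith
  then have "b^2 * exp (- b) \<le> 7 * exp (b/2) * exp (- b)" by (intro mult_right_mono) auto
  also have "7 * exp (b/2) * exp (- b) = 7 * exp (- b / 2)" by (simp add: mult.assoc exp_add[symmetric])
  finally show ?thesis .
qed

lemma KK2_neg:
  assumes x: "x \<ge> 8/7"
  shows "KK c2 (1/2) x < 0"
proof -
  have x0: "x > 0" using x by simp
  define e where "e n = exp (- Lf (1/2) n * x)" for n
  define t where "t n = Lf (1/2) n * x" for n
  define a0 where "a0 = pi * x / 4"
  define bt where "bt n = pi * x * (real n * (real n + 1))" for n
  have tbt: "t n = a0 + bt n" for n by (simp add: t_def Lf_def a0_def bt_def power2_eq_square algebra_simps)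
  have et: "e n = exp (- a0) * exp (- bt n)" for n by (simp add: e_def t_def[symmetric] tbt exp_add[symmetric])
  have bt0: "bt 0 = 0" by (simp add: bt_def)
  have btnn: "bt n \<ge> 0" for n using x0 by (simp add: bt_def)
  have a0: "a0 > 0" using x0 by (simp add: a0_def)
  have sW0: "summable (\<lambda>n. c1 n * e n)" unfolding e_def by (rule scaled_summable0[OF x0 _ c1_bound]) simp
  have sW1: "summable (\<lambda>n. c1 n * t n * e n)" unfolding e_def t_def by (rule scaled_summable1[OF x0 _ c1_bound]) simp
  have sW2: "summable (\<lambda>n. c1 n * (t n)^2 * e n)" unfolding e_def t_def by (rule scaled_summable[OF x0 _ c1_bound]) simp
  define W0 where "W0 = (\<Sum>n. e n)"
  define W1 where "W1 = (\<Sum>n. t n * e n)"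
  define W2 where "W2 = (\<Sum>n. (t n)^2 * e n)"
  have s0: "summable e" using sW0 by (simp add: c1_def)
  have s1: "summable (\<lambda>n. t n * e n)" using sW1 by (simp add: c1_def)
  have s2: "summable (\<lambda>n. (t n)^2 * e n)" using sW2 by (simp add: c1_def)
  have KK: "KK c2 (1/2) x = 4 * ((W2 - W1) * W0 - W1^2)"
  proof -
    have "KK c2 (1/2) x = (\<Sum>n. 2 * ((t n)^2 - t n) * e n) * (\<Sum>n. 2 * e n) - (\<Sum>n. 2 * t n * e n)^2"
    proof -
      have h: "(0::real) \<le> 1/2" by simp
      have c2n: "c2 n = 2" for n by (simp add: c2_def)
      show ?thesis unfolding e_def t_def using KK_form[OF x0 h c2_bound] by (simp add: c2_def[abs_def])
    qed
    also have "(\<Sum>n. 2 * e n) = 2 * W0" unfolding W0_def by (rule suminf_mult[OF s0])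
    also have "(\<Sum>n. 2 * t n * e n) = 2 * W1" unfolding W1_def using suminf_mult[OF s1, of 2] by (simp add: mult.assoc)
    also have "(\<Sum>n. 2 * ((t n)^2 - t n) * e n) = 2 * (W2 - W1)"
    proof -
      have "(\<Sum>n. 2 * ((t n)^2 - t n) * e n) = (\<Sum>n. 2 * ((t n)^2 * e n - t n * e n))"
        by (simp add: algebra_simps)
      also have "\<dots> = 2 * (\<Sum>n. (t n)^2 * e n - t n * e n)" by (rule suminf_mult[OF summable_diff[OF s2 s1]])
      also have "(\<Sum>n. (t n)^2 * e n - t n * e n) = W2 - W1" unfolding W1_def W2_def by (rule suminf_diff[OF s2 s1, symmetric])
      finally show ?thesis .
    qed
    finally show ?thesis by (simp add: power2_eq_square algebra_simps)
  qed
  define V1 where "V1 = (\<Sum>n. bt n * e n)"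
  define V2 where "V2 = (\<Sum>n. (bt n)^2 * e n)"
  have V1e: "V1 = W1 - a0 * W0"
  proof -
    have "(\<Sum>n. t n * e n - a0 * e n) = W1 - a0 * W0" unfolding W1_def W0_def
      using suminf_diff[OF s1 summable_mult[OF s0, of a0]] suminf_mult[OF s0, of a0] by simp
    moreover have "(\<lambda>n. t n * e n - a0 * e n) = (\<lambda>n. bt n * e n)" by (rule ext) (simp add: tbt algebra_simps)
    ultimately show ?thesis unfolding V1_def by simp
  qed
  have V2e: "V2 = W2 - 2 * a0 * W1 + a0^2 * W0"
  proof -
    have sa: "summable (\<lambda>n. (t n)^2 * e n - (2 * a0) * (t n * e n))" by (intro summable_diff s2 summable_mult s1)
    have "(\<Sum>n. ((t n)^2 * e n - (2 * a0) * (t n * e n)) + a0^2 * e n) =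
          (\<Sum>n. (t n)^2 * e n - (2 * a0) * (t n * e n)) + (\<Sum>n. a0^2 * e n)"
      by (rule suminf_add[OF sa summable_mult[OF s0], symmetric])
    also have "(\<Sum>n. (t n)^2 * e n - (2 * a0) * (t n * e n)) = W2 - (2 * a0) * W1"
      unfolding W2_def W1_def using suminf_diff[OF s2 summable_mult[OF s1, of "2*a0"]] suminf_mult[OF s1, of "2*a0"] by simp
    also have "(\<Sum>n. a0^2 * e n) = a0^2 * W0" unfolding W0_def by (rule suminf_mult[OF s0])
    finally have "(\<Sum>n. ((t n)^2 * e n - (2 * a0) * (t n * e n)) + a0^2 * e n) = W2 - 2 * a0 * W1 + a0^2 * W0" by simp
    moreover have "(\<lambda>n. ((t n)^2 * e n - (2 * a0) * (t n * e n)) + a0^2 * e n) = (\<lambda>n. (bt n)^2 * e n)"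
      by (rule ext) (simp add: tbt power2_eq_square algebra_simps)
    ultimately show ?thesis unfolding V2_def by simp
  qed
  have sV2: "summable (\<lambda>n. (bt n)^2 * e n)"
  proof -
    have "summable (\<lambda>n. ((t n)^2 * e n - (2 * a0) * (t n * e n)) + a0^2 * e n)"
      by (intro summable_add summable_diff s2 summable_mult s1 s0)
    moreover have "(\<lambda>n. ((t n)^2 * e n - (2 * a0) * (t n * e n)) + a0^2 * e n) = (\<lambda>n. (bt n)^2 * e n)"
      by (rule ext) (simp add: tbt power2_eq_square algebra_simps)
    ultimately show ?thesis by simp
  qed
  have V1nn: "V1 \<ge> 0" unfolding V1_def
  proof (rule suminf_nonneg)
    show "summable (\<lambda>n. bt n * e n)"
    proof -
      have "summable (\<lambda>n. t n * e n - a0 * e n)" by (intro summable_diff s1 summable_mult s0)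
      moreover have "(\<lambda>n. t n * e n - a0 * e n) = (\<lambda>n. bt n * e n)" by (rule ext) (simp add: tbt algebra_simps)
      ultimately show ?thesis by simp
    qed
    show "0 \<le> bt n * e n" for n using btnn[of n] by (simp add: e_def)
  qed
  have W0ge: "W0 \<ge> exp (- a0)"
  proof -
    have "sum e {0} \<le> W0" unfolding W0_def by (rule sum_le_suminf[OF s0]) (auto simp: e_def)
    then show ?thesis by (simp add: et bt0)
  qed
  have key: "(\<Sum>n. (bt n)^2 * exp (- bt n)) < a0"
  proof -
    define r :: real where "r = exp (- 7/2)"
    have r: "0 < r" "r < 1" by (auto simp: r_def)
    have sb: "summable (\<lambda>n. (bt n)^2 * exp (- bt n))"
    proof -
      have "summable (\<lambda>n. exp a0 * ((bt n)^2 * e n))" by (rule summable_mult[OF sV2])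
      moreover have "(\<lambda>n. exp a0 * ((bt n)^2 * e n)) = (\<lambda>n. (bt n)^2 * exp (- bt n))"
        by (rule ext) (simp add: et exp_minus field_simps)
      ultimately show ?thesis by simp
    qed
    have btS: "bt (Suc n) \<ge> 7 * real (Suc n)" for n
    proof -
      have "pi * x \<ge> 7/2"
      proof -
        have "pi * x \<ge> 3.14 * (8/7)" using pi_approx(1) x by (intro mult_mono) auto
        then show ?thesis by simp
      qed
      moreover have "real (Suc n) + 1 \<ge> 2" by simp
      ultimately have "(7/2) * 2 \<le> pi * x * (real (Suc n) + 1)" by (intro mult_mono) auto
      then have "7 * real (Suc n) \<le> pi * x * (real (Suc n) + 1) * real (Suc n)" by (intro mult_right_mono) auto
      then show ?thesis by (simp add: bt_def mult_ac)
    qed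
    have "(\<Sum>n. (bt n)^2 * exp (- bt n)) = (\<Sum>n. (bt (Suc n))^2 * exp (- bt (Suc n)))"
      using suminf_split_head[OF sb] by (simp add: bt0)
    also have "\<dots> \<le> (\<Sum>n. 7 * r * r^n)"
    proof (rule suminf_le)
      show "summable (\<lambda>n. (bt (Suc n))^2 * exp (- bt (Suc n)))"
        using sb unfolding summable_Suc_iff[of "\<lambda>n. (bt n)^2 * exp (- bt n)", symmetric] .
      show "summable (\<lambda>n. 7 * r * r ^ n)" using r by (intro summable_mult) simp
      fix n
      have b7: "bt (Suc n) \<ge> 7" using btS[of n] by (smt (verit) of_nat_0_le_iff of_nat_Suc)
      have "(bt (Suc n))^2 * exp (- bt (Suc n)) \<le> 7 * exp (- bt (Suc n) / 2)" by (rule beta_bound[OF b7])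
      also have "exp (- bt (Suc n) / 2) \<le> exp (- (7/2) * real (Suc n))" using btS[of n] by simp
      also have "exp (- (7/2) * real (Suc n)) = r * r^n"
      proof -
        have "r * r^n = r ^ Suc n" by simp
        also have "\<dots> = exp (real (Suc n) * (- 7/2))" unfolding r_def by (rule exp_of_nat_mult[symmetric])
        finally show ?thesis by (simp add: mult.commute)
      qed
      finally show "(bt (Suc n))^2 * exp (- bt (Suc n)) \<le> 7 * r * r^n" by (simp add: mult_ac)
    qed
    also have "\<dots> = 7 * r / (1 - r)"
      using suminf_mult[of "\<lambda>n. r^n" "7*r"] suminf_geometric[of r] r by simp
    also have "\<dots> < a0"
    proof -
      have "r = inverse (exp (7/2))" by (simp add: r_def exp_minus)
      also have "\<dots> \<le> inverse 16" by (rule le_imp_inverse_le[OF exp35]) simp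
      finally have r16: "r \<le> 1/16" by simp
      have "7 * r / (1 - r) \<le> 1/2" using r16 r by (simp add: field_simps)
      moreover have "a0 > 1/2"
      proof -
        have "a0 \<ge> 3 * (8/7) / 4" unfolding a0_def using pi_gt3 x by (intro divide_right_mono mult_mono) auto
        then show ?thesis by simp
      qed
      ultimately show ?thesis by simp
    qed
    finally show ?thesis .
  qed
  have V2lt: "V2 < a0 * W0"
  proof -
    have "V2 = exp (- a0) * (\<Sum>n. (bt n)^2 * exp (- bt n))"
    proof -
      have "(\<lambda>n. (bt n)^2 * e n) = (\<lambda>n. exp (- a0) * ((bt n)^2 * exp (- bt n)))"
        by (rule ext) (simp add: et mult_ac)
      moreover have "summable (\<lambda>n. (bt n)^2 * exp (- bt n))"
      proof -
        have "summable (\<lambda>n. exp a0 * ((bt n)^2 * e n))" by (rule summable_mult[OF sV2])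
        moreover have "(\<lambda>n. exp a0 * ((bt n)^2 * e n)) = (\<lambda>n. (bt n)^2 * exp (- bt n))"
          by (rule ext) (simp add: et exp_minus field_simps)
        ultimately show ?thesis by simp
      qed
      ultimately show ?thesis unfolding V2_def by (simp add: suminf_mult)
    qed
    also have "\<dots> < exp (- a0) * a0" using key by simp
    also have "\<dots> \<le> a0 * W0" using W0ge a0 by (simp add: mult.commute mult_left_mono)
    finally show ?thesis .
  qed
  have W0pos: "W0 > 0" using W0ge by (smt (verit) exp_gt_zero)
  have "(W2 - W1) * W0 - W1^2 = V2 * W0 - a0 * W0^2 - V1 * W0 - V1^2"
    unfolding V1e V2e by (simp add: power2_eq_square algebra_simps)
  also have "\<dots> < 0"
  proof -
    have f1: "V2 * W0 < a0 * W0^2" using mult_strict_right_mono[OF V2lt W0pos] by (simp add: power2_eq_square mult.assoc)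
    have f2: "V1 * W0 \<ge> 0" using V1nn W0pos by simp
    have f3: "V1^2 \<ge> 0" by simp
    from f1 f2 f3 show ?thesis by linarith
  qed
  finally show ?thesis unfolding KK by simp
qed

lemma th3_gser: "th3 y = gser c3 0 0 y"
  unfolding th3_def gser_def c3_def Lf_def by (intro suminf_cong) simp

lemma th4_gser: "th4 y = gser c4 0 0 y"
  unfolding th4_def gser_def c4_def Lf_def by (intro suminf_cong) simp

lemma th2_gser: "th2 y = gser c2 (1/2) 0 y"
  unfolding th2_def gser_def c2_def Lf_def by (intro suminf_cong) simp

lemma gser_pos:
  assumes y: "y > 0" and a: "a \<ge> 0" and c: "\<And>n. \<bar>c n\<bar> \<le> 2" and cp: "\<And>n. c n > 0"
  shows "gser c a 0 y > 0"
  unfolding gser_def by (rule suminf_pos[OF gser_summable[OF y a c]]) (simp add: cp)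

lemma th3_pos: "y > 0 \<Longrightarrow> gser c3 0 0 y > 0"
  by (rule gser_pos) (auto simp: c3_bound c3_pos)

lemma th2_pos: "y > 0 \<Longrightarrow> gser c2 (1/2) 0 y > 0"
  by (rule gser_pos) (auto simp: c2_bound c2_def)

lemma th4_pos: assumes y: "y > 0" shows "gser c4 0 0 y > 0"
proof -
  have "th2 (1/y) = th4 (1/(1/y)) / sqrt (1/y)" using jacobi4[of "1/y"] y by simp
  then have "th4 y = th2 (1/y) * sqrt (1/y)" using y by simp
  moreover have "th2 (1/y) > 0" using th2_pos[of "1/y"] y by (simp add: th2_gser)
  ultimately show ?thesis using y by (simp add: th4_gser)
qed

lemma GG3_sym: "GG c3 0 (- u) = GG c3 0 u + u / 2"
proof -
  have "th3 (exp u) = th3 (1 / exp u) / sqrt (exp u)" by (rule jacobi3) simp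
  then have "th3 (exp (- u)) = sqrt (exp u) * th3 (exp u)" by (simp add: exp_minus field_simps)
  then have "ln (th3 (exp (- u))) = ln (sqrt (exp u)) + ln (th3 (exp u))"
    using th3_pos[of "exp u"] by (simp add: ln_mult th3_gser)
  also have "ln (sqrt (exp u)) = u / 2" by (simp add: ln_sqrt)
  finally show ?thesis unfolding GG_def th3_gser by simp
qed

lemma GG4_sym: "GG c4 0 (- v) = GG c2 (1/2) v + v / 2"
proof -
  have "th2 (exp v) = th4 (1 / exp v) / sqrt (exp v)" by (rule jacobi4) simp
  then have "th4 (exp (- v)) = sqrt (exp v) * th2 (exp v)" by (simp add: exp_minus field_simps)
  then have "ln (th4 (exp (- v))) = ln (sqrt (exp v)) + ln (th2 (exp v))"
    using th2_pos[of "exp v"] by (simp add: ln_mult th2_gser)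
  also have "ln (sqrt (exp v)) = v / 2" by (simp add: ln_sqrt)
  finally show ?thesis unfolding GG_def th4_gser th2_gser by simp
qed

lemma GG_deriv3: "(GG c3 0 has_real_derivative QQ c3 0 u) (at u)"
  by (rule GG_deriv[OF order_refl c3_bound th3_pos]) simp
lemma GG_deriv4: "(GG c4 0 has_real_derivative QQ c4 0 u) (at u)"
  by (rule GG_deriv[OF order_refl c4_bound th4_pos]) simp
lemma GG_deriv2: "(GG c2 (1/2) has_real_derivative QQ c2 (1/2) u) (at u)"
  by (rule GG_deriv[OF _ c2_bound th2_pos]) simp_all

lemma QQ3_sym: "QQ c3 0 (- u) = - QQ c3 0 u - 1/2"
proof -
  have d1: "((\<lambda>u. GG c3 0 (- u)) has_real_derivative QQ c3 0 (- u) * (- 1)) (at u)"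
    by (rule DERIV_chain2[OF GG_deriv3]) (auto intro!: derivative_eq_intros)
  have d2: "((\<lambda>u. GG c3 0 u + u / 2) has_real_derivative QQ c3 0 u + 1/2) (at u)"
    by (auto intro!: derivative_eq_intros GG_deriv3)
  have "(\<lambda>u. GG c3 0 (- u)) = (\<lambda>u. GG c3 0 u + u / 2)" by (rule ext) (rule GG3_sym)
  then have "QQ c3 0 (- u) * (- 1) = QQ c3 0 u + 1/2" using d1 d2 DERIV_unique by metis
  then show ?thesis by simp
qed

lemma QQ4_sym: "QQ c4 0 (- v) = - QQ c2 (1/2) v - 1/2"
proof -
  have d1: "((\<lambda>v. GG c4 0 (- v)) has_real_derivative QQ c4 0 (- v) * (- 1)) (at v)"
    by (rule DERIV_chain2[OF GG_deriv4]) (auto intro!: derivative_eq_intros)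
  have d2: "((\<lambda>v. GG c2 (1/2) v + v / 2) has_real_derivative QQ c2 (1/2) v + 1/2) (at v)"
    by (auto intro!: derivative_eq_intros GG_deriv2)
  have "(\<lambda>v. GG c4 0 (- v)) = (\<lambda>v. GG c2 (1/2) v + v / 2)" by (rule ext) (rule GG4_sym)
  then have "QQ c4 0 (- v) * (- 1) = QQ c2 (1/2) v + 1/2" using d1 d2 DERIV_unique by metis
  then show ?thesis by simp
qed

lemma QQ3_inc_pos: "0 \<le> u \<Longrightarrow> u < v \<Longrightarrow> QQ c3 0 u < QQ c3 0 v"
  by (rule QQ_increasing[OF order_refl c3_bound th3_pos, of 0]) (auto intro: KK3_pos)

lemma QQ3_mono: "strict_mono (QQ c3 0)"
proof (rule strict_monoI)
  have neg: "QQ c3 0 u < QQ c3 0 v" if "u < v" "v \<le> 0" for u v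
  proof -
    have "QQ c3 0 (- v) < QQ c3 0 (- u)" using that by (intro QQ3_inc_pos) auto
    then show ?thesis using QQ3_sym[of "- u"] QQ3_sym[of "- v"] by simp
  qed
  fix u v :: real assume uv: "u < v"
  show "QQ c3 0 u < QQ c3 0 v"
  proof (cases "u \<ge> 0")
    case True then show ?thesis using QQ3_inc_pos uv by simp
  next
    case False
    show ?thesis
    proof (cases "v \<le> 0")
      case True then show ?thesis using neg uv by simp
    next
      case False
      have "QQ c3 0 u < QQ c3 0 0" using neg \<open>\<not> u \<ge> 0\<close> by simp
      also have "\<dots> < QQ c3 0 v" using QQ3_inc_pos False by simp
      finally show ?thesis .
    qed
  qed
qed

lemma QQ4_dec_pos: "ln (7/8) \<le> u \<Longrightarrow> u < v \<Longrightarrow> QQ c4 0 v < QQ c4 0 u"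
proof (rule QQ_decreasing[OF order_refl c4_bound th4_pos, of "ln (7/8)"])
  fix x :: real assume "exp (ln (7/8)) \<le> x"
  then have x: "x \<ge> 7/8" by simp
  show "KK c4 0 x < 0" by (rule KK4_neg[OF x th4_pos]) (use x in simp)
qed auto

lemma QQ2_dec_pos: "ln (8/7) \<le> u \<Longrightarrow> u < v \<Longrightarrow> QQ c2 (1/2) v < QQ c2 (1/2) u"
proof (rule QQ_decreasing[OF _ c2_bound th2_pos, of "ln (8/7)"])
  fix x :: real assume "exp (ln (8/7)) \<le> x"
  then have x: "x \<ge> 8/7" by simp
  show "KK c2 (1/2) x < 0" by (rule KK2_neg[OF x])
qed auto

lemma QQ4_antimono: "strict_mono (\<lambda>u. - QQ c4 0 u)"
proof (rule strict_monoI)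
  have l: "ln (7/8::real) = - ln (8/7)" by (simp add: ln_div)
  have neg: "QQ c4 0 v < QQ c4 0 u" if "u < v" "v \<le> ln (7/8)" for u v
  proof -
    have "QQ c2 (1/2) (- u) < QQ c2 (1/2) (- v)" using that l by (intro QQ2_dec_pos) auto
    then show ?thesis using QQ4_sym[of "- u"] QQ4_sym[of "- v"] by simp
  qed
  fix u v :: real assume uv: "u < v"
  show "- QQ c4 0 u < - QQ c4 0 v"
  proof (cases "u \<ge> ln (7/8)")
    case True then show ?thesis using QQ4_dec_pos uv by simp
  next
    case False
    show ?thesis
    proof (cases "v \<le> ln (7/8)")
      case True then show ?thesis using neg uv by simp
    next
      case False
      have "QQ c4 0 (ln (7/8)) < QQ c4 0 u" using neg \<open>\<not> u \<ge> ln (7/8)\<close> by simp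
      moreover have "QQ c4 0 v < QQ c4 0 (ln (7/8))" using QQ4_dec_pos False by simp
      ultimately show ?thesis by simp
    qed
  qed
qed

lemma theta3_ineq:
  assumes r: "r > 0" and s: "s > 0" and s1: "s \<noteq> 1"
  shows "theta3 (r * s) * theta3 (r / s) > (theta3 r)^2"
proof -
  define u where "u = ln r"
  define t where "t = ln s"
  have t: "t \<noteq> 0" using s s1 by (simp add: t_def)
  have "2 * GG c3 0 u < GG c3 0 (u + t) + GG c3 0 (u - t)"
    by (rule strict_conv[OF GG_deriv3 QQ3_mono t])
  moreover have "exp (u + t) = r * s" "exp (u - t) = r / s" "exp u = r"
    using r s by (simp_all add: u_def t_def exp_add exp_diff)
  ultimately have "2 * ln (th3 r) < ln (th3 (r * s)) + ln (th3 (r / s))"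
    unfolding GG_def th3_gser by simp
  moreover have p: "th3 r > 0" "th3 (r * s) > 0" "th3 (r / s) > 0"
    using th3_pos r s by (simp_all add: th3_gser)
  ultimately have "ln ((th3 r)^2) < ln (th3 (r * s) * th3 (r / s))"
    by (simp add: ln_mult power2_eq_square)
  then have "(th3 r)^2 < th3 (r * s) * th3 (r / s)" using p by simp
  then show ?thesis using r s by (simp add: theta3_th3)
qed

lemma theta4_ineq:
  assumes r: "r > 0" and s: "s > 0" and s1: "s \<noteq> 1"
  shows "theta4 (r * s) * theta4 (r / s) < (theta4 r)^2"
proof -
  define u where "u = ln r"
  define t where "t = ln s"
  have t: "t \<noteq> 0" using s s1 by (simp add: t_def)
  have D: "\<And>u. ((\<lambda>u. - GG c4 0 u) has_real_derivative - QQ c4 0 u) (at u)"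
    by (rule DERIV_minus[OF GG_deriv4])
  have "2 * (- GG c4 0 u) < (- GG c4 0 (u + t)) + (- GG c4 0 (u - t))"
    by (rule strict_conv[OF D QQ4_antimono t])
  moreover have "exp (u + t) = r * s" "exp (u - t) = r / s" "exp u = r"
    using r s by (simp_all add: u_def t_def exp_add exp_diff)
  ultimately have "ln (th4 (r * s)) + ln (th4 (r / s)) < 2 * ln (th4 r)"
    unfolding GG_def th4_gser by simp
  moreover have p: "th4 r > 0" "th4 (r * s) > 0" "th4 (r / s) > 0"
    using th4_pos r s by (simp_all add: th4_gser)
  ultimately have "ln (th4 (r * s) * th4 (r / s)) < ln ((th4 r)^2)"
    by (simp add: ln_mult power2_eq_square)
  then have "th4 (r * s) * th4 (r / s) < (th4 r)^2" using p by simp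
  then show ?thesis using r s by (simp add: theta4_th4)
qed

theorem theorem2:
  fixes r s :: real
  assumes "r > 0" and "s > 0"
  shows "theta3 (r * s) * theta3 (r / s) \<ge> (theta3 r)^2
       \<and> theta4 (r * s) * theta4 (r / s) \<le> (theta4 r)^2
       \<and> (theta3 (r * s) * theta3 (r / s) = (theta3 r)^2 \<longrightarrow> s = 1)
       \<and> (theta4 (r * s) * theta4 (r / s) = (theta4 r)^2 \<longrightarrow> s = 1)"
proof (cases "s = 1")
  case True then show ?thesis by (simp add: power2_eq_square)
next
  case False
  have a: "theta3 (r * s) * theta3 (r / s) > (theta3 r)^2" by (rule theta3_ineq[OF assms False])
  have b: "theta4 (r * s) * theta4 (r / s) < (theta4 r)^2" by (rule theta4_ineq[OF assms False])
  show ?thesis using a b by auto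
qed

end
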